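(* Let $p$ be an odd prime, let $G$ be a quasi-powerful $p$-group and let $H=G^{p}Z(G)$. Then $H$ is strongly powerful, i.e. $[H,H]\le H^{p^{2}}$.
   Context: For an odd prime $p$, a finite $p$-group $G$ is powerful if $[G,G]\le G^{p}$, where $G^{p^k}=\langle g^{p^k}\mid g\in G\rangle$, and $G$ is quasi-powerful if $G/Z(G)$ is powerful. A finite $p$-group $X$ is strongly powerful if $[X,X]\le X^{p^{2}}$. *)

theory Defs
  imports "HOL-Algebra.Algebra"
begin

definition grp_center :: "('a, 'b) monoid_scheme \<Rightarrow> 'a set" where
  "grp_center G = {z \<in> carrier G. \<forall>g \<in> carrier G. z \<otimes>\<^bsub>G\<^esub> g = g \<otimes>\<^bsub>G\<^esub> z}"

definition pow_subgroup :: "('a, 'b) monoid_scheme \<Rightarrow> nat \<Rightarrow> 'a set" where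
  "pow_subgroup G n = generate G {g [^]\<^bsub>G\<^esub> n | g. g \<in> carrier G}"

definition p_group :: "nat \<Rightarrow> ('a, 'b) monoid_scheme \<Rightarrow> bool" where
  "p_group p G \<longleftrightarrow> group G \<and> finite (carrier G) \<and> (\<exists>k. order G = p ^ k)"

definition powerful :: "nat \<Rightarrow> ('a, 'b) monoid_scheme \<Rightarrow> bool" where
  "powerful p G \<longleftrightarrow> derived G (carrier G) \<subseteq> pow_subgroup G p"

definition quasi_powerful :: "nat \<Rightarrow> ('a, 'b) monoid_scheme \<Rightarrow> bool" where
  "quasi_powerful p G \<longleftrightarrow> powerful p (FactGroup G (grp_center G))"

definition strongly_powerful :: "nat \<Rightarrow> ('a, 'b) monoid_scheme \<Rightarrow> bool" where
  "strongly_powerful p H \<longleftrightarrow> derived H (carrier H) \<subseteq> pow_subgroup H (p ^ (2::nat))"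

end

theory Submission
  imports Defs
begin

definition cmt :: "('a,'b) monoid_scheme \<Rightarrow> 'a \<Rightarrow> 'a \<Rightarrow> 'a" where
  "cmt G a b = a \<otimes>\<^bsub>G\<^esub> b \<otimes>\<^bsub>G\<^esub> inv\<^bsub>G\<^esub> a \<otimes>\<^bsub>G\<^esub> inv\<^bsub>G\<^esub> b"

context group begin

lemma inv_cancel_l[simp]: "x \<in> carrier G \<Longrightarrow> a \<in> carrier G \<Longrightarrow> inv x \<otimes> (x \<otimes> a) = a"
  by (simp add: m_assoc[symmetric])

lemma inv_cancel_r[simp]: "x \<in> carrier G \<Longrightarrow> a \<in> carrier G \<Longrightarrow> x \<otimes> (inv x \<otimes> a) = a"
  by (simp add: m_assoc[symmetric])

lemma choose2_0[simp]: "(0 choose 2) = 0"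
  by (simp add: numeral_2_eq_2)

lemma cmt_closed[simp]: "a \<in> carrier G \<Longrightarrow> b \<in> carrier G \<Longrightarrow> cmt G a b \<in> carrier G"
  by (simp add: cmt_def)

lemma inv_cmt: "a \<in> carrier G \<Longrightarrow> b \<in> carrier G \<Longrightarrow> inv (cmt G a b) = cmt G b a"
  by (simp add: cmt_def inv_mult_group m_assoc)

lemma cmt_one_iff: "a \<in> carrier G \<Longrightarrow> b \<in> carrier G \<Longrightarrow> cmt G a b = \<one> \<longleftrightarrow> a \<otimes> b = b \<otimes> a"
proof -
  assume a: "a \<in> carrier G" and b: "b \<in> carrier G"
  have "cmt G a b = (a \<otimes> b) \<otimes> inv (b \<otimes> a)"
    using a b by (simp add: cmt_def inv_mult_group m_assoc)
  then show ?thesis using a b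
    by (metis inv_closed m_closed r_inv inv_equality inv_inv)
qed

lemma cmt_one_left[simp]: "b \<in> carrier G \<Longrightarrow> cmt G \<one> b = \<one>"
  by (simp add: cmt_def)

lemma cmt_one_right[simp]: "b \<in> carrier G \<Longrightarrow> cmt G b \<one> = \<one>"
  by (simp add: cmt_def)

lemma conj_cmt: "x \<in> carrier G \<Longrightarrow> c \<in> carrier G \<Longrightarrow> x \<otimes> c \<otimes> inv x = cmt G x c \<otimes> c"
  by (simp add: cmt_def m_assoc)

lemma cmt_mult_left: "a \<in> carrier G \<Longrightarrow> b \<in> carrier G \<Longrightarrow> g \<in> carrier G \<Longrightarrow>
   cmt G (a \<otimes> b) g = a \<otimes> cmt G b g \<otimes> inv a \<otimes> cmt G a g"
  by (simp add: cmt_def m_assoc inv_mult_group)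

lemma cmt_inv_left: "a \<in> carrier G \<Longrightarrow> g \<in> carrier G \<Longrightarrow>
   cmt G (inv a) g = inv a \<otimes> cmt G g a \<otimes> a"
  by (simp add: cmt_def m_assoc)

lemma conj_mult: "x \<in> carrier G \<Longrightarrow> a \<in> carrier G \<Longrightarrow> b \<in> carrier G \<Longrightarrow>
   x \<otimes> (a \<otimes> b) \<otimes> inv x = (x \<otimes> a \<otimes> inv x) \<otimes> (x \<otimes> b \<otimes> inv x)"
  by (simp add: m_assoc)

lemma conj_inv: "x \<in> carrier G \<Longrightarrow> a \<in> carrier G \<Longrightarrow>
   x \<otimes> inv a \<otimes> inv x = inv (x \<otimes> a \<otimes> inv x)"
  by (simp add: m_assoc inv_mult_group)

lemma conj_pow: "x \<in> carrier G \<Longrightarrow> a \<in> carrier G \<Longrightarrow>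
   x \<otimes> a [^] (n::nat) \<otimes> inv x = (x \<otimes> a \<otimes> inv x) [^] n"
proof (induction n)
  case 0 then show ?case by simp
next
  case (Suc n)
  have "x \<otimes> a [^] Suc n \<otimes> inv x = (x \<otimes> a [^] n \<otimes> inv x) \<otimes> (x \<otimes> a \<otimes> inv x)"
    using Suc.prems by (simp add: m_assoc)
  then show ?case using Suc by simp
qed

lemma conj_cmt2: "x \<in> carrier G \<Longrightarrow> a \<in> carrier G \<Longrightarrow> b \<in> carrier G \<Longrightarrow>
   x \<otimes> cmt G a b \<otimes> inv x = cmt G (x \<otimes> a \<otimes> inv x) (x \<otimes> b \<otimes> inv x)"
  by (simp add: cmt_def m_assoc inv_mult_group)

lemma choose2_Suc: "(Suc n choose 2) = (n choose 2) + n"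
  by (simp add: numeral_2_eq_2)

lemma cmt_pow_left_gen:
  assumes x: "x \<in> carrier G" and y: "y \<in> carrier G"
    and c: "c = cmt G x y" and d: "d = cmt G x c"
    and xd: "x \<otimes> d = d \<otimes> x" and dc: "d \<otimes> c = c \<otimes> d"
  shows "cmt G (x [^] (n::nat)) y = d [^] (n choose 2) \<otimes> c [^] n"
proof (induction n)
  case 0 then show ?case using y by simp
next
  case (Suc n)
  have cc: "c \<in> carrier G" using c x y by simp
  have dd: "d \<in> carrier G" using d x cc by simp
  have e1: "x \<otimes> d \<otimes> inv x = d" using xd x dd by (metis inv_solve_right m_closed inv_closed)
  have e2: "x \<otimes> c \<otimes> inv x = d \<otimes> c" using conj_cmt[OF x cc] d by simp
  have "cmt G (x [^] Suc n) y = cmt G (x \<otimes> x [^] n) y"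
    using x by (simp only: nat_pow_Suc2)
  also have "\<dots> = x \<otimes> cmt G (x [^] n) y \<otimes> inv x \<otimes> c"
    using x y c by (simp add: cmt_mult_left)
  also have "\<dots> = x \<otimes> (d [^] (n choose 2) \<otimes> c [^] n) \<otimes> inv x \<otimes> c"
    using Suc by simp
  also have "\<dots> = (x \<otimes> d [^] (n choose 2) \<otimes> inv x) \<otimes> (x \<otimes> c [^] n \<otimes> inv x) \<otimes> c"
    using x dd cc by (simp add: conj_mult)
  also have "\<dots> = d [^] (n choose 2) \<otimes> (d \<otimes> c) [^] n \<otimes> c"
    using x dd cc by (simp add: conj_pow e1 e2)
  also have "\<dots> = d [^] (n choose 2) \<otimes> (d [^] n \<otimes> c [^] n) \<otimes> c"
    using pow_mult_distrib[OF dc dd cc] by simp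
  also have "\<dots> = d [^] (Suc n choose 2) \<otimes> c [^] Suc n"
    using dd cc by (simp add: nat_pow_mult[symmetric] m_assoc choose2_Suc)
  finally show ?case .
qed

lemma cmt_pow_right_gen:
  assumes u: "u \<in> carrier G" and v: "v \<in> carrier G"
    and vk: "v \<otimes> cmt G u v = cmt G u v \<otimes> v"
  shows "cmt G u (v [^] (n::nat)) = cmt G u v [^] n"
proof -
  define k where "k = cmt G u v"
  have kk: "k \<in> carrier G" using k_def u v by simp
  have "u \<otimes> v \<otimes> inv u = k \<otimes> v" using conj_cmt[OF u v] k_def by simp
  then have "u \<otimes> v [^] n \<otimes> inv u = (k \<otimes> v) [^] n" using conj_pow[OF u v] by simp
  also have "\<dots> = k [^] n \<otimes> v [^] n" using vk kk v k_def by (simp add: pow_mult_distrib)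
  finally have "u \<otimes> v [^] n \<otimes> inv u = k [^] n \<otimes> v [^] n" .
  then have "cmt G u (v [^] n) = k [^] n \<otimes> v [^] n \<otimes> inv (v [^] n)"
    by (simp add: cmt_def)
  then show ?thesis using kk v k_def by (simp add: m_assoc)
qed

lemma cmt_pow_left_comm:
  assumes u: "u \<in> carrier G" and v: "v \<in> carrier G"
    and uk: "u \<otimes> cmt G u v = cmt G u v \<otimes> u"
  shows "cmt G (u [^] (n::nat)) v = cmt G u v [^] n"
proof -
  have kk: "cmt G u v \<in> carrier G" using u v by simp
  have d1: "cmt G u (cmt G u v) = \<one>" using cmt_one_iff[OF u kk] uk by simp
  have "cmt G (u [^] n) v = \<one> [^] (n choose 2) \<otimes> cmt G u v [^] n"
    by (rule cmt_pow_left_gen[OF u v refl d1[symmetric]]) (use u kk in simp_all)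
  then show ?thesis using kk by simp
qed

lemma pow_mult_comm_gen:
  assumes u: "u \<in> carrier G" and v: "v \<in> carrier G"
    and uk: "u \<otimes> cmt G u v = cmt G u v \<otimes> u"
    and vk: "v \<otimes> cmt G u v = cmt G u v \<otimes> v"
  shows "(u \<otimes> v) [^] (n::nat) \<otimes> cmt G u v [^] (n choose 2) = u [^] n \<otimes> v [^] n"
proof (induction n)
  case 0 then show ?case by simp
next
  case (Suc n)
  define k where "k = cmt G u v"
  have kk: "k \<in> carrier G" using k_def u v by simp
  have uk': "u \<otimes> k = k \<otimes> u" and vk': "v \<otimes> k = k \<otimes> v" using uk vk k_def by auto
  have ukC: "u \<otimes> k [^] m = k [^] m \<otimes> u" for m :: nat
    using uk' u kk by (metis group_commutes_pow)
  have vkC: "v \<otimes> k [^] m = k [^] m \<otimes> v" for m :: nat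
    using vk' v kk by (metis group_commutes_pow)
  have L: "cmt G u (v [^] n) = k [^] n" using cmt_pow_right_gen[OF u v vk] k_def by simp
  have L2: "u \<otimes> v [^] n = k [^] n \<otimes> v [^] n \<otimes> u"
  proof -
    have "u \<otimes> v [^] n = cmt G u (v [^] n) \<otimes> (v [^] n \<otimes> u)"
      using u v by (simp add: cmt_def m_assoc)
    then show ?thesis using L u v kk by (simp add: m_assoc)
  qed
  have vnk: "v [^] n \<otimes> k [^] n = k [^] n \<otimes> v [^] n"
    using vk' v kk by (metis group_commutes_pow nat_pow_closed)
  have "(u \<otimes> v) [^] Suc n \<otimes> k [^] (Suc n choose 2)
      = (u \<otimes> v) [^] n \<otimes> u \<otimes> v \<otimes> (k [^] (n choose 2) \<otimes> k [^] n)"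
    using u v kk by (simp add: choose2_Suc nat_pow_mult m_assoc)
  also have "\<dots> = ((u \<otimes> v) [^] n \<otimes> k [^] (n choose 2)) \<otimes> u \<otimes> v \<otimes> k [^] n"
  proof -
    have h: "u \<otimes> (v \<otimes> k [^] (n choose 2)) = k [^] (n choose 2) \<otimes> (u \<otimes> v)"
      using ukC vkC u v kk by (metis m_assoc nat_pow_closed)
    have "u \<otimes> (v \<otimes> (k [^] (n choose 2) \<otimes> k [^] n)) = (u \<otimes> (v \<otimes> k [^] (n choose 2))) \<otimes> k [^] n"
      using u v kk by (simp add: m_assoc)
    also have "\<dots> = k [^] (n choose 2) \<otimes> (u \<otimes> v) \<otimes> k [^] n" using h by simp
    finally show ?thesis using u v kk by (simp add: m_assoc)
  qed
  also have "\<dots> = u [^] n \<otimes> (u \<otimes> v [^] n) \<otimes> v"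
  proof -
    have vn: "v [^] n \<in> carrier G" and kn: "k [^] n \<in> carrier G" using v kk by auto
    have s1: "v [^] n \<otimes> u \<otimes> v \<otimes> k [^] n = v [^] n \<otimes> u \<otimes> k [^] n \<otimes> v"
      using vkC[of n] u v vn kn by (simp add: m_assoc)
    have s2: "v [^] n \<otimes> u \<otimes> k [^] n = k [^] n \<otimes> v [^] n \<otimes> u"
    proof -
      have "v [^] n \<otimes> u \<otimes> k [^] n = v [^] n \<otimes> (u \<otimes> k [^] n)" using u vn kn by (simp add: m_assoc)
      also have "\<dots> = v [^] n \<otimes> (k [^] n \<otimes> u)" using ukC[of n] by simp
      also have "\<dots> = (v [^] n \<otimes> k [^] n) \<otimes> u" using u vn kn by (simp add: m_assoc)
      also have "\<dots> = k [^] n \<otimes> v [^] n \<otimes> u" using vnk by simp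
      finally show ?thesis .
    qed
    have s3: "v [^] n \<otimes> u \<otimes> v \<otimes> k [^] n = u \<otimes> v [^] n \<otimes> v"
      using s1 s2 L2 by simp
    have IH: "(u \<otimes> v) [^] n \<otimes> k [^] (n choose 2) = u [^] n \<otimes> v [^] n" using Suc k_def by simp
    have "((u \<otimes> v) [^] n \<otimes> k [^] (n choose 2)) \<otimes> u \<otimes> v \<otimes> k [^] n
        = u [^] n \<otimes> v [^] n \<otimes> u \<otimes> v \<otimes> k [^] n" using IH by simp
    also have "\<dots> = u [^] n \<otimes> (v [^] n \<otimes> u \<otimes> v \<otimes> k [^] n)" using u v vn kn by (simp add: m_assoc)
    also have "\<dots> = u [^] n \<otimes> (u \<otimes> v [^] n \<otimes> v)" using s3 by simp
    finally show ?thesis using u v vn by (simp add: m_assoc)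
  qed
  also have "\<dots> = u [^] Suc n \<otimes> v [^] Suc n"
    using u v by (simp add: m_assoc nat_pow_Suc2)
  finally show ?case using k_def by simp
qed

end

lemma choose2_odd: "odd (n::nat) \<Longrightarrow> (n choose 2) = n * ((n - 1) div 2)"
proof -
  assume "odd n"
  then obtain m where m: "n = 2*m+1" by (metis oddE)
  show ?thesis by (simp add: m choose_two)
qed

declare one_FactGroup[simp del] mult_FactGroup[simp del]

context group begin

lemma subgroup_pow_closed: "subgroup W G \<Longrightarrow> a \<in> W \<Longrightarrow> a [^] (n::nat) \<in> W"
  by (induction n) (auto simp: subgroup.one_closed subgroup.m_closed)

lemma pi_group_hom: "W \<lhd> G \<Longrightarrow> group_hom G (G Mod W) (\<lambda>a. W #> a)"
  by (simp add: group_hom_def group_hom_axioms_def is_group normal.factorgroup_is_group normal.r_coset_hom_Mod)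

lemma pi_one_iff: "W \<lhd> G \<Longrightarrow> a \<in> carrier G \<Longrightarrow> (W #> a = W) = (a \<in> W)"
  by (meson coset_join1 coset_join2 normal_imp_subgroup)

lemma pi_eq_imp: assumes W: "W \<lhd> G" and a: "a \<in> carrier G" and b: "b \<in> carrier G"
  and e: "W #> a = W #> b" shows "a \<otimes> inv b \<in> W"
proof -
  interpret gh: group_hom G "G Mod W" "\<lambda>a. W #> a" using pi_group_hom[OF W] .
  have "W #> (a \<otimes> inv b) = (W #> a) \<otimes>\<^bsub>G Mod W\<^esub> inv\<^bsub>G Mod W\<^esub> (W #> b)"
    using a b gh.hom_mult gh.hom_inv by (metis inv_closed)
  also have "\<dots> = \<one>\<^bsub>G Mod W\<^esub>" using b e by (simp add: gh.H.r_inv)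
  also have "\<dots> = W" by (simp add: one_FactGroup)
  finally have e2: "W #> (a \<otimes> inv b) = W" .
  have "a \<otimes> inv b \<in> carrier G" using a b by simp
  then show ?thesis using pi_one_iff[OF W, of "a \<otimes> inv b"] e2 by blast
qed

lemma pi_cmt: "W \<lhd> G \<Longrightarrow> a \<in> carrier G \<Longrightarrow> b \<in> carrier G \<Longrightarrow>
   W #> cmt G a b = cmt (G Mod W) (W #> a) (W #> b)"
proof -
  assume W: "W \<lhd> G" and a: "a \<in> carrier G" and b: "b \<in> carrier G"
  interpret gh: group_hom G "G Mod W" "\<lambda>a. W #> a" using pi_group_hom[OF W] .
  show ?thesis using a b unfolding cmt_def
    by (simp only: gh.hom_mult gh.hom_inv inv_closed m_closed)
qed

lemma pi_commute: assumes W: "W \<lhd> G" and a: "a \<in> carrier G" and b: "b \<in> carrier G"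
  and c: "cmt G a b \<in> W"
  shows "(W #> a) \<otimes>\<^bsub>G Mod W\<^esub> (W #> b) = (W #> b) \<otimes>\<^bsub>G Mod W\<^esub> (W #> a)"
proof -
  interpret gh: group_hom G "G Mod W" "\<lambda>a. W #> a" using pi_group_hom[OF W] .
  have "cmt (G Mod W) (W #> a) (W #> b) = \<one>\<^bsub>G Mod W\<^esub>"
    using pi_cmt[OF W a b, symmetric] pi_one_iff[OF W, of "cmt G a b"] c a b by (simp add: one_FactGroup)
  then show ?thesis using gh.H.cmt_one_iff a b by simp
qed

lemma mod_cmt_pow_left:
  assumes W: "W \<lhd> G" and x: "x \<in> carrier G" and y: "y \<in> carrier G"
    and h1: "cmt G x (cmt G x (cmt G x y)) \<in> W"
    and h2: "cmt G (cmt G x (cmt G x y)) (cmt G x y) \<in> W"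
  shows "cmt G (x [^] (n::nat)) y \<otimes> inv (cmt G x (cmt G x y) [^] (n choose 2) \<otimes> cmt G x y [^] n) \<in> W"
proof -
  interpret gh: group_hom G "G Mod W" "\<lambda>a. W #> a" using pi_group_hom[OF W] .
  define c where "c = cmt G x y"
  define d where "d = cmt G x c"
  have cc: "c \<in> carrier G" and dd: "d \<in> carrier G" using x y c_def d_def by auto
  have "cmt (G Mod W) ((W #> x) [^]\<^bsub>G Mod W\<^esub> n) (W #> y)
     = (W #> d) [^]\<^bsub>G Mod W\<^esub> (n choose 2) \<otimes>\<^bsub>G Mod W\<^esub> (W #> c) [^]\<^bsub>G Mod W\<^esub> n"
  proof (rule gh.H.cmt_pow_left_gen)
    show "W #> x \<in> carrier (G Mod W)" "W #> y \<in> carrier (G Mod W)" using x y by auto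
    show "W #> c = cmt (G Mod W) (W #> x) (W #> y)" using pi_cmt[OF W x y] c_def by simp
    show "W #> d = cmt (G Mod W) (W #> x) (W #> c)" using pi_cmt[OF W x cc] d_def by simp
    show "(W #> x) \<otimes>\<^bsub>G Mod W\<^esub> (W #> d) = (W #> d) \<otimes>\<^bsub>G Mod W\<^esub> (W #> x)"
      using pi_commute[OF W x dd] h1 c_def d_def by simp
    show "(W #> d) \<otimes>\<^bsub>G Mod W\<^esub> (W #> c) = (W #> c) \<otimes>\<^bsub>G Mod W\<^esub> (W #> d)"
      using pi_commute[OF W dd cc] h2 c_def d_def by simp
  qed
  then have "W #> cmt G (x [^] n) y = W #> (d [^] (n choose 2) \<otimes> c [^] n)"
    using x y cc dd pi_cmt[OF W, of "x [^] n" y]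
    by (simp only: gh.hom_nat_pow gh.hom_mult nat_pow_closed)
  from pi_eq_imp[OF W _ _ this] have "cmt G (x [^] n) y \<otimes> inv (d [^] (n choose 2) \<otimes> c [^] n) \<in> W"
    using x y cc dd by simp
  then show ?thesis using c_def d_def by simp
qed

lemma mod_cmt_pow_left':
  assumes W: "W \<lhd> G" and x: "x \<in> carrier G" and y: "y \<in> carrier G"
    and h1: "cmt G x (cmt G x (cmt G x y)) \<in> W"
    and h2: "cmt G (cmt G x (cmt G x y)) (cmt G x y) \<in> W"
    and n: "odd n"
    and h3: "cmt G x (cmt G x y) [^] n \<in> W" and h4: "cmt G x y [^] n \<in> W"
  shows "cmt G (x [^] (n::nat)) y \<in> W"
proof -
  define c where "c = cmt G x y"
  define d where "d = cmt G x c"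
  have cc: "c \<in> carrier G" and dd: "d \<in> carrier G" using x y c_def d_def by auto
  have sW: "subgroup W G" using W normal_imp_subgroup by blast
  have e: "d [^] (n choose 2) = (d [^] n) [^] ((n - 1) div 2)"
    using choose2_odd[OF n] dd by (simp add: nat_pow_pow)
  have "d [^] n \<in> W" using h3 unfolding d_def c_def .
  then have "(d [^] n) [^] ((n - 1) div 2) \<in> W" by (rule subgroup_pow_closed[OF sW])
  then have "d [^] (n choose 2) \<in> W" by (subst e)
  moreover have "c [^] n \<in> W" using h4 unfolding c_def .
  ultimately have m: "d [^] (n choose 2) \<otimes> c [^] n \<in> W" by (rule subgroup.m_closed[OF sW])
  have "cmt G (x [^] n) y \<otimes> inv (d [^] (n choose 2) \<otimes> c [^] n) \<in> W"
    using mod_cmt_pow_left[OF W x y h1 h2, folded c_def, folded d_def] .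
  then have "(cmt G (x [^] n) y \<otimes> inv (d [^] (n choose 2) \<otimes> c [^] n)) \<otimes> (d [^] (n choose 2) \<otimes> c [^] n) \<in> W"
    using m by (rule subgroup.m_closed[OF sW])
  moreover have "(cmt G (x [^] n) y \<otimes> inv (d [^] (n choose 2) \<otimes> c [^] n)) \<otimes> (d [^] (n choose 2) \<otimes> c [^] n)
     = cmt G (x [^] n) y"
    using x y cc dd by (simp only: m_assoc l_inv r_one m_closed nat_pow_closed cmt_closed inv_closed)
  ultimately show ?thesis by simp
qed

lemma mod_pow_mult:
  assumes W: "W \<lhd> G" and u: "u \<in> carrier G" and v: "v \<in> carrier G"
    and n: "odd n" and hu: "u [^] (n::nat) \<in> W" and hv: "v [^] n \<in> W"
    and hk1: "cmt G u (cmt G u v) \<in> W" and hk2: "cmt G v (cmt G u v) \<in> W"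
  shows "(u \<otimes> v) [^] n \<in> W"
proof -
  interpret gh: group_hom G "G Mod W" "\<lambda>a. W #> a" using pi_group_hom[OF W] .
  define k where "k = cmt G u v"
  have kk: "k \<in> carrier G" using k_def u v by simp
  let ?Q = "G Mod W"
  have U: "W #> u \<in> carrier ?Q" and V: "W #> v \<in> carrier ?Q" and K: "W #> k \<in> carrier ?Q"
    using u v kk by auto
  have Kc: "W #> k = cmt ?Q (W #> u) (W #> v)" using pi_cmt[OF W u v] k_def by simp
  have uk: "(W #> u) \<otimes>\<^bsub>?Q\<^esub> (W #> k) = (W #> k) \<otimes>\<^bsub>?Q\<^esub> (W #> u)"
    using pi_commute[OF W u kk] hk1 k_def by simp
  have vk: "(W #> v) \<otimes>\<^bsub>?Q\<^esub> (W #> k) = (W #> k) \<otimes>\<^bsub>?Q\<^esub> (W #> v)"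
    using pi_commute[OF W v kk] hk2 k_def by simp
  have Un: "(W #> u) [^]\<^bsub>?Q\<^esub> n = \<one>\<^bsub>?Q\<^esub>" using hu u pi_one_iff[OF W]
    by (simp add: gh.hom_nat_pow[symmetric] one_FactGroup)
  have Vn: "(W #> v) [^]\<^bsub>?Q\<^esub> n = \<one>\<^bsub>?Q\<^esub>" using hv v pi_one_iff[OF W]
    by (simp add: gh.hom_nat_pow[symmetric] one_FactGroup)
  have Kn: "(W #> k) [^]\<^bsub>?Q\<^esub> n = \<one>\<^bsub>?Q\<^esub>"
  proof -
    have "cmt ?Q ((W #> u) [^]\<^bsub>?Q\<^esub> n) (W #> v) = cmt ?Q (W #> u) (W #> v) [^]\<^bsub>?Q\<^esub> n"
      by (rule gh.H.cmt_pow_left_comm[OF U V]) (use uk Kc in simp)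
    then show ?thesis using Un Kc V by simp
  qed
  have KC: "(W #> k) [^]\<^bsub>?Q\<^esub> (n choose 2) = \<one>\<^bsub>?Q\<^esub>"
    using Kn K by (simp add: choose2_odd[OF n] gh.H.nat_pow_pow[OF K, symmetric] del: gh.H.nat_pow_pow)
  have "((W #> u) \<otimes>\<^bsub>?Q\<^esub> (W #> v)) [^]\<^bsub>?Q\<^esub> n \<otimes>\<^bsub>?Q\<^esub> cmt ?Q (W #> u) (W #> v) [^]\<^bsub>?Q\<^esub> (n choose 2)
      = (W #> u) [^]\<^bsub>?Q\<^esub> n \<otimes>\<^bsub>?Q\<^esub> (W #> v) [^]\<^bsub>?Q\<^esub> n"
    by (rule gh.H.pow_mult_comm_gen[OF U V]) (use uk vk Kc in simp_all)
  then have "((W #> u) \<otimes>\<^bsub>?Q\<^esub> (W #> v)) [^]\<^bsub>?Q\<^esub> n = \<one>\<^bsub>?Q\<^esub>"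
    using KC Kc Un Vn U V by simp
  then have "W #> ((u \<otimes> v) [^] n) = W"
    using u v by (simp add: gh.hom_nat_pow one_FactGroup)
  moreover have "(u \<otimes> v) [^] n \<in> carrier G" using u v by simp
  ultimately show ?thesis using pi_one_iff[OF W, of "(u \<otimes> v) [^] n"] by blast
qed

lemma mod_cmt_pow_right:
  assumes W: "W \<lhd> G" and u: "u \<in> carrier G" and v: "v \<in> carrier G"
    and hk: "cmt G v (cmt G u v) \<in> W" and hv: "v [^] (n::nat) \<in> W"
  shows "cmt G u v [^] n \<in> W"
proof -
  interpret gh: group_hom G "G Mod W" "\<lambda>a. W #> a" using pi_group_hom[OF W] .
  define k where "k = cmt G u v"
  have kk: "k \<in> carrier G" using k_def u v by simp
  let ?Q = "G Mod W"
  have U: "W #> u \<in> carrier ?Q" and V: "W #> v \<in> carrier ?Q" and K: "W #> k \<in> carrier ?Q"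
    using u v kk by auto
  have Kc: "W #> k = cmt ?Q (W #> u) (W #> v)" using pi_cmt[OF W u v] k_def by simp
  have vk: "(W #> v) \<otimes>\<^bsub>?Q\<^esub> (W #> k) = (W #> k) \<otimes>\<^bsub>?Q\<^esub> (W #> v)"
    using pi_commute[OF W v kk] hk k_def by simp
  have Vn: "(W #> v) [^]\<^bsub>?Q\<^esub> n = \<one>\<^bsub>?Q\<^esub>" using hv v pi_one_iff[OF W]
    by (simp add: gh.hom_nat_pow[symmetric] one_FactGroup)
  have "cmt ?Q (W #> u) ((W #> v) [^]\<^bsub>?Q\<^esub> n) = cmt ?Q (W #> u) (W #> v) [^]\<^bsub>?Q\<^esub> n"
    by (rule gh.H.cmt_pow_right_gen[OF U V]) (use vk Kc in simp)
  then have "(W #> k) [^]\<^bsub>?Q\<^esub> n = \<one>\<^bsub>?Q\<^esub>" using Vn Kc U by simp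
  then have "W #> (k [^] n) = W" using kk by (simp add: gh.hom_nat_pow one_FactGroup)
  moreover have "k [^] n \<in> carrier G" using kk by simp
  ultimately show ?thesis using pi_one_iff[OF W, of "k [^] n"] k_def by blast
qed

end

definition powset :: "('a,'b) monoid_scheme \<Rightarrow> 'a set \<Rightarrow> nat \<Rightarrow> 'a set" where
  "powset G S n = {x [^]\<^bsub>G\<^esub> n | x. x \<in> S}"

definition cmset :: "('a,'b) monoid_scheme \<Rightarrow> 'a set \<Rightarrow> 'a set" where
  "cmset G S = {cmt G x g | x g. x \<in> S \<and> g \<in> carrier G}"

definition Cm :: "('a,'b) monoid_scheme \<Rightarrow> 'a set \<Rightarrow> 'a set" where
  "Cm G S = generate G (cmset G S)"

definition cinv :: "('a,'b) monoid_scheme \<Rightarrow> 'a set \<Rightarrow> bool" where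
  "cinv G S \<longleftrightarrow> S \<subseteq> carrier G \<and> (\<forall>x\<in>S. \<forall>g\<in>carrier G. g \<otimes>\<^bsub>G\<^esub> x \<otimes>\<^bsub>G\<^esub> inv\<^bsub>G\<^esub> g \<in> S)"

context group begin

lemma normal_cinv: assumes "S \<lhd> G" shows "cinv G S"
  unfolding cinv_def using subgroup.subset[OF normal_imp_subgroup[OF assms]] normal.inv_op_closed2[OF assms] by blast

lemma cinv_gen_normal: "cinv G S \<Longrightarrow> generate G S \<lhd> G"
  unfolding cinv_def by (intro normal_generateI) auto

lemma powset_cinv: "cinv G S \<Longrightarrow> cinv G (powset G S n)"
  unfolding cinv_def powset_def
  by (auto simp: conj_pow) (metis conj_pow m_closed inv_closed subsetD)

lemma cmset_cinv: "cinv G S \<Longrightarrow> cinv G (cmset G S)"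
  unfolding cinv_def cmset_def
proof (auto)
  fix x g h assume S: "S \<subseteq> carrier G" "\<forall>x\<in>S. \<forall>g\<in>carrier G. g \<otimes> x \<otimes> inv g \<in> S"
    and x: "x \<in> S" and g: "g \<in> carrier G" and h: "h \<in> carrier G"
  have xc: "x \<in> carrier G" using S x by auto
  show "\<exists>x' g'. h \<otimes> cmt G x g \<otimes> inv h = cmt G x' g' \<and> x' \<in> S \<and> g' \<in> carrier G"
    using conj_cmt2[OF h xc g] S x g h by blast
qed

lemma Cm_normal: "cinv G S \<Longrightarrow> Cm G S \<lhd> G"
  unfolding Cm_def by (intro cinv_gen_normal cmset_cinv)

lemma cmt_in_Cm: "x \<in> S \<Longrightarrow> g \<in> carrier G \<Longrightarrow> cmt G x g \<in> Cm G S"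
  unfolding Cm_def cmset_def by (rule generate.incl) blast

lemma cmt_in_Cm': "x \<in> S \<Longrightarrow> g \<in> carrier G \<Longrightarrow> S \<subseteq> carrier G \<Longrightarrow> cmt G g x \<in> Cm G S"
proof -
  assume x: "x \<in> S" and g: "g \<in> carrier G" and S: "S \<subseteq> carrier G"
  have "cmt G x g \<in> Cm G S" using cmt_in_Cm[OF x g] .
  moreover have "cmset G S \<subseteq> carrier G" using S unfolding cmset_def by auto
  ultimately have "inv (cmt G x g) \<in> Cm G S" unfolding Cm_def using generate_m_inv_closed by blast
  then show ?thesis using inv_cmt x g S by auto
qed

lemma Cm_mono: "S \<subseteq> Y \<Longrightarrow> Cm G S \<subseteq> Cm G Y"
  unfolding Cm_def cmset_def by (rule mono_generate) blast

lemma Cm_subgroup_incl: "subgroup K G \<Longrightarrow> (\<And>x g. x \<in> S \<Longrightarrow> g \<in> carrier G \<Longrightarrow> cmt G x g \<in> K) \<Longrightarrow> Cm G S \<subseteq> K"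
  unfolding Cm_def cmset_def by (rule generate_subgroup_incl) auto

lemma normal_cmt_in: "W \<lhd> G \<Longrightarrow> w \<in> W \<Longrightarrow> g \<in> carrier G \<Longrightarrow> cmt G w g \<in> W"
proof -
  assume W: "W \<lhd> G" and w: "w \<in> W" and g: "g \<in> carrier G"
  have sW: "subgroup W G" by (rule normal_imp_subgroup[OF W])
  have wc: "w \<in> carrier G" by (rule subgroup.mem_carrier[OF sW w])
  have "g \<otimes> inv w \<otimes> inv g \<in> W" by (rule normal.inv_op_closed2[OF W g subgroup.m_inv_closed[OF sW w]])
  then have "w \<otimes> (g \<otimes> inv w \<otimes> inv g) \<in> W" by (rule subgroup.m_closed[OF sW w])
  then show ?thesis using wc g by (simp add: cmt_def m_assoc)
qed

lemma normal_cmt_in': "W \<lhd> G \<Longrightarrow> w \<in> W \<Longrightarrow> g \<in> carrier G \<Longrightarrow> cmt G g w \<in> W"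
proof -
  assume W: "W \<lhd> G" and w: "w \<in> W" and g: "g \<in> carrier G"
  have sW: "subgroup W G" by (rule normal_imp_subgroup[OF W])
  have wc: "w \<in> carrier G" by (rule subgroup.mem_carrier[OF sW w])
  have "inv (cmt G w g) \<in> W" by (rule subgroup.m_inv_closed[OF sW normal_cmt_in[OF W w g]])
  then show ?thesis using inv_cmt wc g by simp
qed

lemma Cm_normal_sub: "W \<lhd> G \<Longrightarrow> Cm G W \<subseteq> W"
  by (rule Cm_subgroup_incl) (auto intro: normal_cmt_in normal_imp_subgroup)

lemma cmt_sub_subgroup:
  assumes W: "W \<lhd> G"
  shows "subgroup {a \<in> carrier G. \<forall>g\<in>carrier G. cmt G a g \<in> W} G"
proof -
  have sW: "subgroup W G" by (rule normal_imp_subgroup[OF W])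
  show ?thesis
  proof (rule subgroupI)
    show "{a \<in> carrier G. \<forall>g\<in>carrier G. cmt G a g \<in> W} \<noteq> {}"
      using subgroup.one_closed[OF sW] by (auto intro!: exI[of _ \<one>])
  next
    fix a assume a0: "a \<in> {a \<in> carrier G. \<forall>g\<in>carrier G. cmt G a g \<in> W}"
    then have a: "a \<in> carrier G" and aw: "\<And>g. g \<in> carrier G \<Longrightarrow> cmt G a g \<in> W" by auto
    have "cmt G (inv a) g \<in> W" if g: "g \<in> carrier G" for g
    proof -
      have "cmt G g a \<in> W" using subgroup.m_inv_closed[OF sW aw[OF g]] inv_cmt[OF a g] by simp
      then have "inv a \<otimes> cmt G g a \<otimes> inv (inv a) \<in> W"
        by (rule normal.inv_op_closed2[OF W inv_closed[OF a]])
      then show ?thesis using a g cmt_inv_left by simp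
    qed
    then show "inv a \<in> {a \<in> carrier G. \<forall>g\<in>carrier G. cmt G a g \<in> W}" using a by simp
  next
    fix a b assume a0: "a \<in> {a \<in> carrier G. \<forall>g\<in>carrier G. cmt G a g \<in> W}"
      and b0: "b \<in> {a \<in> carrier G. \<forall>g\<in>carrier G. cmt G a g \<in> W}"
    then have a: "a \<in> carrier G" and aw: "\<And>g. g \<in> carrier G \<Longrightarrow> cmt G a g \<in> W"
      and b: "b \<in> carrier G" and bw: "\<And>g. g \<in> carrier G \<Longrightarrow> cmt G b g \<in> W" by auto
    have "cmt G (a \<otimes> b) g \<in> W" if g: "g \<in> carrier G" for g
    proof -
      have "a \<otimes> cmt G b g \<otimes> inv a \<in> W" by (rule normal.inv_op_closed2[OF W a bw[OF g]])
      then have "a \<otimes> cmt G b g \<otimes> inv a \<otimes> cmt G a g \<in> W" by (rule subgroup.m_closed[OF sW _ aw[OF g]])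
      then show ?thesis using a b g cmt_mult_left by simp
    qed
    then show "a \<otimes> b \<in> {a \<in> carrier G. \<forall>g\<in>carrier G. cmt G a g \<in> W}" using a b by simp
  qed auto
qed

lemma normal_sub_in: "W \<lhd> G \<Longrightarrow> w \<in> W \<Longrightarrow> w \<in> carrier G"
  by (rule subgroup.mem_carrier[OF normal_imp_subgroup])

lemma set_mult_normal: "A \<lhd> G \<Longrightarrow> B \<lhd> G \<Longrightarrow> A <#> B \<lhd> G"
  by (rule normal_subgroup_set_mult_closed)

lemma set_mult_left_sub: assumes "subgroup B G" "A \<subseteq> carrier G" shows "A \<subseteq> A <#> B"
proof
  fix a assume a: "a \<in> A"
  have "a \<otimes> \<one> \<in> A <#> B" unfolding set_mult_def using a subgroup.one_closed[OF assms(1)] by blast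
  then show "a \<in> A <#> B" using a assms(2) by auto
qed

lemma set_mult_right_sub: assumes "subgroup A G" "B \<subseteq> carrier G" shows "B \<subseteq> A <#> B"
proof
  fix a assume a: "a \<in> B"
  have "\<one> \<otimes> a \<in> A <#> B" unfolding set_mult_def using a subgroup.one_closed[OF assms(1)] by blast
  then show "a \<in> A <#> B" using a assms(2) by auto
qed

lemma set_mult_self: assumes "subgroup A G" shows "A <#> A = A"
proof
  show "A <#> A \<subseteq> A" unfolding set_mult_def using subgroup.m_closed[OF assms] by blast
  show "A \<subseteq> A <#> A" by (rule set_mult_left_sub[OF assms subgroup.subset[OF assms]])
qed

end

lemma prime_power_dvd_cases:
  fixes p :: nat assumes p: "Factorial_Ring.prime p" and d: "d dvd p ^ k"
  shows "d = 1 \<or> p dvd d"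
proof -
  obtain i where "i \<le> k" "d = p ^ i" using divides_primepow_nat[OF p] d by blast
  then show ?thesis by (cases i) auto
qed

context group begin

lemma p_group_center_normal:
  assumes fin: "finite (carrier G)" and p: "Factorial_Ring.prime p" and ord: "order G = p ^ k"
    and A: "A \<lhd> G" and ne: "A \<noteq> {\<one>}"
  shows "\<exists>a\<in>A. a \<noteq> \<one> \<and> (\<forall>g\<in>carrier G. g \<otimes> a = a \<otimes> g)"
proof (rule ccontr)
  assume no: "\<not> (\<exists>a\<in>A. a \<noteq> \<one> \<and> (\<forall>g\<in>carrier G. g \<otimes> a = a \<otimes> g))"
  define \<phi> where "\<phi> = (\<lambda>g. (\<lambda>h \<in> carrier G. g \<otimes> h \<otimes> (inv g)))"
  interpret act: group_action G "carrier G" \<phi> unfolding \<phi>_def by (rule action_by_conjugation)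
  have sA: "subgroup A G" by (rule normal_imp_subgroup[OF A])
  have Ac: "A \<subseteq> carrier G" by (rule subgroup.subset[OF sA])
  define B where "B = A - {\<one>}"
  define f where "f = (\<lambda>x. if x \<in> B then (1::nat) else 0)"
  have orbit_eq: "orbit G \<phi> x = {g \<otimes> x \<otimes> inv g | g. g \<in> carrier G}" if x: "x \<in> carrier G" for x
    unfolding orbit_def \<phi>_def using x by auto
  have S1: "(\<Sum>orb\<in>orbits G (carrier G) \<phi>. \<Sum>x\<in>orb. f x) = (\<Sum>x\<in>carrier G. f x)"
    by (rule act.disjoint_sum[OF fin])
  have S2: "(\<Sum>x\<in>carrier G. f x) = card B"
  proof -
    have "B = {x \<in> carrier G. x \<in> B}" using Ac B_def by auto
    then show ?thesis unfolding f_def using card_as_sums[OF _ fin, of B "\<lambda>x. x \<in> B"] by simp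
  qed
  have S3: "p dvd (\<Sum>x\<in>orb. f x)" if orb: "orb \<in> orbits G (carrier G) \<phi>" for orb
  proof -
    obtain x where x: "x \<in> carrier G" and ox: "orb = orbit G \<phi> x"
      using orb unfolding orbits_def by blast
    have orbsub: "orb \<subseteq> carrier G" using ox orbit_eq[OF x] x by auto
    have finorb: "finite orb" using orbsub fin finite_subset by blast
    show ?thesis
    proof (cases "x \<in> B")
      case True
      then have xA: "x \<in> A" and x1: "x \<noteq> \<one>" using B_def by auto
      have inB: "y \<in> B" if y: "y \<in> orb" for y
      proof -
        obtain g where g: "g \<in> carrier G" and yg: "y = g \<otimes> x \<otimes> inv g"
          using y ox orbit_eq[OF x] by auto
        have "y \<in> A" using yg normal.inv_op_closed2[OF A g xA] by simp
        moreover have "y \<noteq> \<one>"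
        proof
          assume "y = \<one>"
          then have "g \<otimes> x \<otimes> inv g = \<one>" using yg by simp
          moreover have "x = inv g \<otimes> (g \<otimes> x \<otimes> inv g) \<otimes> g" using g x by (simp add: m_assoc)
          ultimately have "x = \<one>" using g by simp
          then show False using x1 by simp
        qed
        ultimately show ?thesis using B_def by simp
      qed
      have "(\<Sum>y\<in>orb. f y) = (\<Sum>y\<in>orb. 1)" using inB unfolding f_def by simp
      also have "\<dots> = card orb" by simp
      finally have sum_eq: "(\<Sum>y\<in>orb. f y) = card orb" .
      have "card orb * card (stabilizer G \<phi> x) = order G"
        using act.orbit_stabilizer_theorem[OF x] ox by simp
      then have "card orb dvd p ^ k" using ord by (metis dvd_triv_left)
      then have "card orb = 1 \<or> p dvd card orb" by (rule prime_power_dvd_cases[OF p])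
      moreover have "card orb \<noteq> 1"
      proof
        assume c1: "card orb = 1"
        have xo: "x \<in> orb" using act.orbit_refl[OF x] ox by simp
        have "orb = {x}" using c1 xo by (metis card_1_singletonE singletonD)
        have central: "g \<otimes> x = x \<otimes> g" if g: "g \<in> carrier G" for g
        proof -
          have "g \<otimes> x \<otimes> inv g \<in> orb" using ox orbit_eq[OF x] g by auto
          then have "g \<otimes> x \<otimes> inv g = x" using \<open>orb = {x}\<close> by simp
          moreover have "g \<otimes> x = (g \<otimes> x \<otimes> inv g) \<otimes> g" using g x by (simp add: m_assoc)
          ultimately show ?thesis by simp
        qed
        then show False using no xA x1 by blast
      qed
      ultimately show ?thesis using sum_eq by simp
    next
      case False
      have notB: "y \<notin> B" if y: "y \<in> orb" for y
      proof
        assume yB: "y \<in> B"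
        obtain g where g: "g \<in> carrier G" and yg: "y = g \<otimes> x \<otimes> inv g"
          using y ox orbit_eq[OF x] by auto
        have yA: "y \<in> A" and y1: "y \<noteq> \<one>" using yB B_def by auto
        have xeq: "x = inv g \<otimes> y \<otimes> inv (inv g)" using yg g x by (simp add: m_assoc)
        have "x \<in> A" using xeq normal.inv_op_closed2[OF A inv_closed[OF g] yA] by simp
        moreover have "x \<noteq> \<one>"
        proof
          assume "x = \<one>"
          then have "y = \<one>" using yg g by simp
          then show False using y1 by simp
        qed
        ultimately show False using False B_def by simp
      qed
      have "(\<Sum>y\<in>orb. f y) = 0" using notB unfolding f_def by simp
      then show ?thesis by simp
    qed
  qed
  have "p dvd card B" using S1 S2 S3 by (metis dvd_sum)
  moreover have cardA: "card A = card B + 1"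
  proof -
    have "\<one> \<in> A" by (rule subgroup.one_closed[OF sA])
    moreover have "finite A" using Ac fin finite_subset by blast
    ultimately have "card A > 0" "\<one> \<in> A" "finite A" using card_gt_0_iff by blast+
    then show ?thesis unfolding B_def by (simp add: card_Diff_singleton_if)
  qed
  moreover have "p dvd card A"
  proof -
    have "card (rcosets A) * card A = order G" by (rule lagrange[OF sA])
    then have "card A dvd p ^ k" using ord by (metis dvd_triv_right)
    then have "card A = 1 \<or> p dvd card A" by (rule prime_power_dvd_cases[OF p])
    moreover have "card A \<noteq> 1"
    proof
      assume "card A = 1"
      then have "A = {\<one>}" using subgroup.one_closed[OF sA] by (metis card_1_singletonE singletonD)
      then show False using ne by simp
    qed
    ultimately show ?thesis by simp
  qed
  ultimately have "p dvd 1" by (metis dvd_add_right_iff)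
  then show False using p by simp
qed

end

context group begin

lemma quotient_p_group:
  assumes fin: "finite (carrier G)" and p: "Factorial_Ring.prime p" and ord: "order G = p ^ k"
    and Y: "Y \<lhd> G"
  shows "finite (carrier (G Mod Y)) \<and> (\<exists>j. order (G Mod Y) = p ^ j)"
proof -
  have sY: "subgroup Y G" by (rule normal_imp_subgroup[OF Y])
  have cQ: "carrier (G Mod Y) = rcosets Y" by (simp add: FactGroup_def)
  have "carrier (G Mod Y) = (\<lambda>a. Y #> a) ` carrier G" by (rule carrier_FactGroup)
  then have f: "finite (carrier (G Mod Y))" using fin by simp
  have "card (rcosets Y) * card Y = order G" by (rule lagrange[OF sY])
  then have "card (rcosets Y) dvd p ^ k" using ord by (metis dvd_triv_left)
  then obtain i where "card (rcosets Y) = p ^ i" using divides_primepow_nat[OF p] by blast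
  then have "order (G Mod Y) = p ^ i" unfolding order_def cQ .
  then show ?thesis using f by blast
qed

lemma central_mod_exists:
  assumes fin: "finite (carrier G)" and p: "Factorial_Ring.prime p" and ord: "order G = p ^ k"
    and Y: "Y \<lhd> G" and M: "M \<lhd> G" and nsub: "\<not> M \<subseteq> Y"
  shows "\<exists>s\<in>M. s \<notin> Y \<and> (\<forall>g\<in>carrier G. cmt G s g \<in> Y)"
proof -
  interpret gh: group_hom G "G Mod Y" "\<lambda>a. Y #> a" by (rule pi_group_hom[OF Y])
  let ?Q = "G Mod Y"
  obtain j where fQ: "finite (carrier ?Q)" and oQ: "order ?Q = p ^ j"
    using quotient_p_group[OF fin p ord Y] by blast
  have sM: "subgroup M G" by (rule normal_imp_subgroup[OF M])
  have Mc: "M \<subseteq> carrier G" by (rule subgroup.subset[OF sM])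
  define A where "A = (\<lambda>a. Y #> a) ` M"
  have sA: "subgroup A ?Q" unfolding A_def by (rule gh.subgroup_img_is_subgroup[OF sM])
  have nA: "A \<lhd> ?Q"
  proof -
    have "q \<otimes>\<^bsub>?Q\<^esub> a \<otimes>\<^bsub>?Q\<^esub> inv\<^bsub>?Q\<^esub> q \<in> A" if q: "q \<in> carrier ?Q" and a: "a \<in> A" for q a
    proof -
      obtain g where g: "g \<in> carrier G" and qg: "q = Y #> g"
        using q carrier_FactGroup by (metis imageE)
      obtain m where m: "m \<in> M" and am: "a = Y #> m" using a A_def by blast
      have mc: "m \<in> carrier G" using m Mc by blast
      have "q \<otimes>\<^bsub>?Q\<^esub> a \<otimes>\<^bsub>?Q\<^esub> inv\<^bsub>?Q\<^esub> q = Y #> (g \<otimes> m \<otimes> inv g)"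
        using qg am g mc by simp
      moreover have "g \<otimes> m \<otimes> inv g \<in> M" by (rule normal.inv_op_closed2[OF M g m])
      ultimately show ?thesis unfolding A_def by blast
    qed
    then show ?thesis using gh.H.normal_inv_iff sA by blast
  qed
  obtain m where m: "m \<in> M" and mY: "m \<notin> Y" using nsub by blast
  have "Y #> m \<noteq> Y" using pi_one_iff[OF Y] m Mc mY by blast
  then have neA: "A \<noteq> {\<one>\<^bsub>?Q\<^esub>}" using m A_def by (auto simp: one_FactGroup)
  obtain a where aA: "a \<in> A" and a1: "a \<noteq> \<one>\<^bsub>?Q\<^esub>" and ac: "\<forall>q\<in>carrier ?Q. q \<otimes>\<^bsub>?Q\<^esub> a = a \<otimes>\<^bsub>?Q\<^esub> q"
    using gh.H.p_group_center_normal[OF fQ p oQ nA neA] by blast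
  obtain s where s: "s \<in> M" and as: "a = Y #> s" using aA A_def by blast
  have sc: "s \<in> carrier G" using s Mc by blast
  have sY: "s \<notin> Y"
  proof
    assume "s \<in> Y"
    then have "Y #> s = Y" using pi_one_iff[OF Y sc] by simp
    then show False using a1 as by (simp add: one_FactGroup)
  qed
  have "cmt G s g \<in> Y" if g: "g \<in> carrier G" for g
  proof -
    have "(Y #> g) \<otimes>\<^bsub>?Q\<^esub> (Y #> s) = (Y #> s) \<otimes>\<^bsub>?Q\<^esub> (Y #> g)" using ac as g by simp
    then have "cmt ?Q (Y #> s) (Y #> g) = \<one>\<^bsub>?Q\<^esub>" using gh.H.cmt_one_iff g sc by simp
    then have "Y #> cmt G s g = Y" using pi_cmt[OF Y sc g] by (simp add: one_FactGroup)
    then show ?thesis using pi_one_iff[OF Y] sc g by simp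
  qed
  then show ?thesis using s sY by blast
qed

lemma nil_lemma_aux:
  assumes fin: "finite (carrier G)" and p: "Factorial_Ring.prime p" and ord: "order G = p ^ k"
  shows "Y \<lhd> G \<Longrightarrow> M \<lhd> G \<Longrightarrow> Y \<subseteq> M \<Longrightarrow> M \<subseteq> Y <#> Cm G M \<Longrightarrow> M \<subseteq> Y"
proof (induction "card M - card Y" arbitrary: Y rule: less_induct)
  case less
  note Y = less.prems(1) and M = less.prems(2) and YM = less.prems(3) and MY = less.prems(4)
  have sY: "subgroup Y G" by (rule normal_imp_subgroup[OF Y])
  have sM: "subgroup M G" by (rule normal_imp_subgroup[OF M])
  have Mc: "M \<subseteq> carrier G" by (rule subgroup.subset[OF sM])
  show "M \<subseteq> Y"
  proof (rule ccontr)
    assume nsub: "\<not> M \<subseteq> Y"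
    obtain s where s: "s \<in> M" and sNY: "s \<notin> Y" and sc: "\<forall>g\<in>carrier G. cmt G s g \<in> Y"
      using central_mod_exists[OF fin p ord Y M nsub] by blast
    define Y' where "Y' = M \<inter> {a \<in> carrier G. \<forall>g\<in>carrier G. cmt G a g \<in> Y}"
    have sY': "subgroup Y' G" unfolding Y'_def by (rule subgroups_Inter_pair[OF sM cmt_sub_subgroup[OF Y]])
    have nY': "Y' \<lhd> G"
    proof -
      have "h \<otimes> m \<otimes> inv h \<in> Y'" if h: "h \<in> carrier G" and m: "m \<in> Y'" for h m
      proof -
        have mM: "m \<in> M" and mc: "m \<in> carrier G" and mw: "\<And>g. g \<in> carrier G \<Longrightarrow> cmt G m g \<in> Y"
          using m Y'_def by auto
        have "cmt G (h \<otimes> m \<otimes> inv h) g \<in> Y" if g: "g \<in> carrier G" for g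
        proof -
          have g': "inv h \<otimes> g \<otimes> h \<in> carrier G" using g h by simp
          have "h \<otimes> cmt G m (inv h \<otimes> g \<otimes> h) \<otimes> inv h \<in> Y"
            by (rule normal.inv_op_closed2[OF Y h mw[OF g']])
          moreover have "h \<otimes> cmt G m (inv h \<otimes> g \<otimes> h) \<otimes> inv h = cmt G (h \<otimes> m \<otimes> inv h) (h \<otimes> (inv h \<otimes> g \<otimes> h) \<otimes> inv h)"
            by (rule conj_cmt2[OF h mc g'])
          moreover have "h \<otimes> (inv h \<otimes> g \<otimes> h) \<otimes> inv h = g" using h g by (simp add: m_assoc)
          ultimately show ?thesis by simp
        qed
        moreover have "h \<otimes> m \<otimes> inv h \<in> M" by (rule normal.inv_op_closed2[OF M h mM])
        ultimately show ?thesis unfolding Y'_def using h mc by simp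
      qed
      then show ?thesis using normal_inv_iff sY' by blast
    qed
    have YY': "Y \<subseteq> Y'"
    proof
      fix y assume y: "y \<in> Y"
      have "y \<in> M" using y YM by blast
      moreover have "y \<in> carrier G" by (rule subgroup.mem_carrier[OF sY y])
      moreover have "\<forall>g\<in>carrier G. cmt G y g \<in> Y" using normal_cmt_in[OF Y y] by blast
      ultimately show "y \<in> Y'" unfolding Y'_def by simp
    qed
    have sY'2: "s \<in> Y'" unfolding Y'_def using s sc Mc by blast
    have Y'M: "Y' \<subseteq> M" unfolding Y'_def by blast
    have finM: "finite M" using Mc fin finite_subset by blast
    have "card Y < card Y'"
    proof (rule psubset_card_mono)
      show "finite Y'" using Y'M finM finite_subset by blast
      show "Y \<subset> Y'" using YY' sY'2 sNY by blast
    qed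
    moreover have "card Y' \<le> card M" using Y'M finM card_mono by blast
    ultimately have lt: "card M - card Y' < card M - card Y" by linarith
    have "M \<subseteq> Y' <#> Cm G M"
    proof -
      have "Y <#> Cm G M \<subseteq> Y' <#> Cm G M" by (rule mono_set_mult[OF YY' subset_refl])
      then show ?thesis using MY by blast
    qed
    then have MY': "M \<subseteq> Y'" using less.hyps[OF lt nY' M Y'M] by blast
    have "Cm G M \<subseteq> Y"
    proof (rule Cm_subgroup_incl[OF sY])
      fix x g assume "x \<in> M" "g \<in> carrier G"
      then show "cmt G x g \<in> Y" using MY' Y'_def by blast
    qed
    then have "Y <#> Cm G M \<subseteq> Y <#> Y" by (rule mono_set_mult[OF subset_refl])
    then have "M \<subseteq> Y" using MY set_mult_self[OF sY] by blast
    then show False using nsub by blast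
  qed
qed

lemma nil_lemma:
  assumes fin: "finite (carrier G)" and p: "Factorial_Ring.prime p" and ord: "order G = p ^ k"
    and U: "U \<lhd> G" and Y: "Y \<lhd> G" and UY: "U \<subseteq> Y <#> Cm G U"
  shows "U \<subseteq> Y"
proof -
  have sX: "subgroup U G" by (rule normal_imp_subgroup[OF U])
  have sY: "subgroup Y G" by (rule normal_imp_subgroup[OF Y])
  define M where "M = U <#> Y"
  have nM: "M \<lhd> G" unfolding M_def by (rule set_mult_normal[OF U Y])
  have sM: "subgroup M G" by (rule normal_imp_subgroup[OF nM])
  have YM: "Y \<subseteq> M" unfolding M_def by (rule set_mult_right_sub[OF sX subgroup.subset[OF sY]])
  have UM: "U \<subseteq> M" unfolding M_def by (rule set_mult_left_sub[OF sY subgroup.subset[OF sX]])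
  have nP: "Y <#> Cm G M \<lhd> G" by (rule set_mult_normal[OF Y Cm_normal[OF normal_cinv[OF nM]]])
  have sP: "subgroup (Y <#> Cm G M) G" by (rule normal_imp_subgroup[OF nP])
  have CmM: "Cm G U \<subseteq> Cm G M" by (rule Cm_mono[OF UM])
  have "U \<subseteq> Y <#> Cm G M" using UY mono_set_mult[OF subset_refl CmM] by blast
  moreover have "Y \<subseteq> Y <#> Cm G M"
    by (rule set_mult_left_sub[OF normal_imp_subgroup[OF Cm_normal[OF normal_cinv[OF nM]]] subgroup.subset[OF sY]])
  ultimately have "M \<subseteq> (Y <#> Cm G M) <#> (Y <#> Cm G M)" unfolding M_def by (rule mono_set_mult)
  then have "M \<subseteq> Y <#> Cm G M" using set_mult_self[OF sP] by simp
  then have "M \<subseteq> Y" by (rule nil_lemma_aux[OF fin p ord Y nM YM])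
  then show ?thesis using UM by blast
qed

end

context group begin

lemma centerD: "z \<in> grp_center G \<Longrightarrow> g \<in> carrier G \<Longrightarrow> z \<otimes> g = g \<otimes> z"
  unfolding grp_center_def by blast

lemma centerC: "z \<in> grp_center G \<Longrightarrow> z \<in> carrier G"
  unfolding grp_center_def by blast

lemma center_subgroup: "subgroup (grp_center G) G"
proof (rule subgroupI)
  show "grp_center G \<subseteq> carrier G" unfolding grp_center_def by blast
  show "grp_center G \<noteq> {}" unfolding grp_center_def by (auto intro!: exI[of _ \<one>])
next
  fix a assume a: "a \<in> grp_center G"
  have ac: "a \<in> carrier G" using centerC[OF a] .
  have "inv a \<otimes> g = g \<otimes> inv a" if g: "g \<in> carrier G" for g
  proof -
    have "a \<otimes> g = g \<otimes> a" using centerD[OF a g] .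
    then have "inv a \<otimes> (a \<otimes> g) \<otimes> inv a = inv a \<otimes> (g \<otimes> a) \<otimes> inv a" by simp
    then show ?thesis using ac g by (simp add: m_assoc)
  qed
  then show "inv a \<in> grp_center G" unfolding grp_center_def using ac by simp
next
  fix a b assume a: "a \<in> grp_center G" and b: "b \<in> grp_center G"
  have ac: "a \<in> carrier G" and bc: "b \<in> carrier G" using centerC a b by auto
  have "a \<otimes> b \<otimes> g = g \<otimes> (a \<otimes> b)" if g: "g \<in> carrier G" for g
  proof -
    have "a \<otimes> b \<otimes> g = a \<otimes> (g \<otimes> b)" using centerD[OF b g] ac bc g by (simp add: m_assoc)
    also have "\<dots> = (a \<otimes> g) \<otimes> b" using ac bc g by (simp add: m_assoc)
    also have "\<dots> = g \<otimes> (a \<otimes> b)" using centerD[OF a g] ac bc g by (simp add: m_assoc)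
    finally show ?thesis .
  qed
  then show "a \<otimes> b \<in> grp_center G" unfolding grp_center_def using ac bc by simp
qed

lemma center_normal: "grp_center G \<lhd> G"
proof -
  have "g \<otimes> z \<otimes> inv g \<in> grp_center G" if g: "g \<in> carrier G" and z: "z \<in> grp_center G" for g z
  proof -
    have "g \<otimes> z \<otimes> inv g = z \<otimes> g \<otimes> inv g" using centerD[OF z g] by simp
    also have "\<dots> = z" using centerC[OF z] g by (simp add: m_assoc)
    finally show ?thesis using z by simp
  qed
  then show ?thesis using normal_inv_iff center_subgroup by blast
qed

lemma cmt_central_left: "z \<in> grp_center G \<Longrightarrow> g \<in> carrier G \<Longrightarrow> cmt G z g = \<one>"
  using cmt_one_iff centerC centerD by simp

lemma cmt_central_right: "z \<in> grp_center G \<Longrightarrow> g \<in> carrier G \<Longrightarrow> cmt G g z = \<one>"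
  using cmt_one_iff centerC centerD by simp

lemma cmt_mult_central: "n \<in> carrier G \<Longrightarrow> z \<in> grp_center G \<Longrightarrow> g \<in> carrier G \<Longrightarrow>
    cmt G (n \<otimes> z) g = cmt G n g"
  using cmt_mult_left[OF _ centerC] cmt_central_left by (simp add: m_assoc)

lemma pow_center_normal: "{z \<in> grp_center G. z [^] (n::nat) = \<one>} \<lhd> G"
proof -
  have sZ: "subgroup (grp_center G) G" by (rule center_subgroup)
  have sE: "subgroup {z \<in> grp_center G. z [^] n = \<one>} G"
  proof (rule subgroupI)
    show "{z \<in> grp_center G. z [^] n = \<one>} \<subseteq> carrier G" using centerC by blast
    show "{z \<in> grp_center G. z [^] n = \<one>} \<noteq> {}" using subgroup.one_closed[OF sZ] by (auto intro!: exI[of _ \<one>])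
  next
    fix a assume "a \<in> {z \<in> grp_center G. z [^] n = \<one>}"
    then have a: "a \<in> grp_center G" and an: "a [^] n = \<one>" by auto
    have "inv a [^] n = \<one>" using nat_pow_inv[OF centerC[OF a]] an by simp
    then show "inv a \<in> {z \<in> grp_center G. z [^] n = \<one>}" using subgroup.m_inv_closed[OF sZ a] by simp
  next
    fix a b assume "a \<in> {z \<in> grp_center G. z [^] n = \<one>}" "b \<in> {z \<in> grp_center G. z [^] n = \<one>}"
    then have a: "a \<in> grp_center G" and an: "a [^] n = \<one>" and b: "b \<in> grp_center G" and bn: "b [^] n = \<one>" by auto
    have "(a \<otimes> b) [^] n = a [^] n \<otimes> b [^] n"
      by (rule pow_mult_distrib[OF centerD[OF a centerC[OF b]] centerC[OF a] centerC[OF b]])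
    then have "(a \<otimes> b) [^] n = \<one>" using an bn by simp
    then show "a \<otimes> b \<in> {z \<in> grp_center G. z [^] n = \<one>}" using subgroup.m_closed[OF sZ a b] by simp
  qed
  have "g \<otimes> z \<otimes> inv g \<in> {z \<in> grp_center G. z [^] n = \<one>}"
    if g: "g \<in> carrier G" and z: "z \<in> {z \<in> grp_center G. z [^] n = \<one>}" for g z
  proof -
    have zc: "z \<in> grp_center G" using z by simp
    have "g \<otimes> z \<otimes> inv g = z \<otimes> g \<otimes> inv g" using centerD[OF zc g] by simp
    also have "\<dots> = z" using centerC[OF zc] g by (simp add: m_assoc)
    finally show ?thesis using z by simp
  qed
  then show ?thesis using normal_inv_iff sE by blast
qed

end

locale gamma_setup = group G for G (structure) +
  fixes p :: nat and k :: nat and H :: "'a set"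
  assumes fin: "finite (carrier G)" and pp: "Factorial_Ring.prime p" and oddp: "odd p"
    and ord: "order G = p ^ k"
    and nH: "H \<lhd> G"
    and powH: "\<And>g. g \<in> carrier G \<Longrightarrow> g [^] p \<in> H"
    and cmH: "\<And>x y. x \<in> carrier G \<Longrightarrow> y \<in> carrier G \<Longrightarrow> cmt G x y \<in> H"
    and expH: "\<And>h. h \<in> H \<Longrightarrow> h [^] (p * p) = \<one>"
    and decH: "\<And>h. h \<in> H \<Longrightarrow> \<exists>n\<in>generate G (powset G (carrier G) p). \<exists>z\<in>grp_center G. h = n \<otimes> z"

context gamma_setup begin

abbreviation "Hp \<equiv> generate G (powset G H p)"
abbreviation "Dd \<equiv> Cm G H"
abbreviation "Xp \<equiv> Cm G Hp"
abbreviation "Zc \<equiv> grp_center G"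

lemma sH: "subgroup H G" by (rule normal_imp_subgroup[OF nH])
lemma Hc: "H \<subseteq> carrier G" by (rule subgroup.subset[OF sH])
lemma Hp_normal: "Hp \<lhd> G" by (rule cinv_gen_normal[OF powset_cinv[OF normal_cinv[OF nH]]])
lemma sHp: "subgroup Hp G" by (rule normal_imp_subgroup[OF Hp_normal])
lemma Hpc: "Hp \<subseteq> carrier G" by (rule subgroup.subset[OF sHp])
lemma powset_H_sub: "powset G H p \<subseteq> H"
  unfolding powset_def using subgroup_pow_closed[OF sH] by blast
lemma Hp_sub_H: "Hp \<subseteq> H" by (rule generate_subgroup_incl[OF powset_H_sub sH])
lemma pow_in_Hp: "h \<in> H \<Longrightarrow> h [^] p \<in> Hp"
  unfolding powset_def by (rule generate.incl) blast
lemma D_normal: "Dd \<lhd> G" by (rule Cm_normal[OF normal_cinv[OF nH]])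
lemma sD: "subgroup Dd G" by (rule normal_imp_subgroup[OF D_normal])
lemma D_sub_H: "Dd \<subseteq> H" by (rule Cm_subgroup_incl[OF sH cmH]) (use Hc in blast)
lemma Xp_normal: "Xp \<lhd> G" by (rule Cm_normal[OF normal_cinv[OF Hp_normal]])
lemma sZ: "subgroup Zc G" by (rule center_subgroup)

lemma N_sub: assumes S: "subgroup S G" and gen: "\<And>g. g \<in> carrier G \<Longrightarrow> g [^] p \<in> S"
  shows "generate G (powset G (carrier G) p) \<subseteq> S"
  by (rule generate_subgroup_incl[OF _ S]) (auto simp: powset_def gen)

lemma H_cmt_reduce: assumes S: "subgroup S G" and gen: "\<And>g. g \<in> carrier G \<Longrightarrow> g [^] p \<in> S"
  and h: "h \<in> H" and g: "g \<in> carrier G"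
  and Sprop: "\<And>n. n \<in> S \<Longrightarrow> cmt G n g \<in> W"
  shows "cmt G h g \<in> W"
proof -
  obtain n z where n: "n \<in> generate G (powset G (carrier G) p)" and z: "z \<in> Zc" and hz: "h = n \<otimes> z"
    using decH[OF h] by blast
  have nS: "n \<in> S" using N_sub[OF S gen] n by blast
  have nc: "n \<in> carrier G" using subgroup.mem_carrier[OF S nS] .
  have "cmt G h g = cmt G n g" using hz cmt_mult_central[OF nc z g] by simp
  then show ?thesis using Sprop[OF nS] by simp
qed

lemma step1: "Dd \<subseteq> Hp"
proof (rule nil_lemma[OF fin pp ord D_normal Hp_normal])
  define W where "W = Hp <#> Cm G Dd"
  have nW: "W \<lhd> G" unfolding W_def by (rule set_mult_normal[OF Hp_normal Cm_normal[OF normal_cinv[OF D_normal]]])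
  have sW: "subgroup W G" by (rule normal_imp_subgroup[OF nW])
  have HpW: "Hp \<subseteq> W" unfolding W_def
    by (rule set_mult_left_sub[OF normal_imp_subgroup[OF Cm_normal[OF normal_cinv[OF D_normal]]] Hpc])
  have CmW: "Cm G Dd \<subseteq> W" unfolding W_def
    by (rule set_mult_right_sub[OF sHp subgroup.subset[OF normal_imp_subgroup[OF Cm_normal[OF normal_cinv[OF D_normal]]]]])
  have Dc: "Dd \<subseteq> carrier G" by (rule subgroup.subset[OF sD])
  define S where "S = {a \<in> carrier G. \<forall>g\<in>carrier G. cmt G a g \<in> W}"
  have sS: "subgroup S G" unfolding S_def by (rule cmt_sub_subgroup[OF nW])
  have genS: "x [^] p \<in> S" if x: "x \<in> carrier G" for x
  proof -
    have "cmt G (x [^] p) g \<in> W" if g: "g \<in> carrier G" for g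
    proof (rule mod_cmt_pow_left'[OF nW x g])
      define c where "c = cmt G x g"
      define d where "d = cmt G x c"
      have cH: "c \<in> H" unfolding c_def by (rule cmH[OF x g])
      have cc: "c \<in> carrier G" using cH Hc by blast
      have dD: "d \<in> Dd" unfolding d_def by (rule cmt_in_Cm'[OF cH x Hc])
      have dc: "d \<in> carrier G" using dD Dc by blast
      have dH: "d \<in> H" using dD D_sub_H by blast
      show "cmt G x (cmt G x (cmt G x g)) \<in> W"
        using cmt_in_Cm'[OF dD x Dc] CmW unfolding d_def c_def by blast
      show "cmt G (cmt G x (cmt G x g)) (cmt G x g) \<in> W"
        using cmt_in_Cm[OF dD cc] CmW unfolding d_def c_def by blast
      show "odd p" by (rule oddp)
      show "cmt G x (cmt G x g) [^] p \<in> W" using pow_in_Hp[OF dH] HpW unfolding d_def c_def by blast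
      show "cmt G x g [^] p \<in> W" using pow_in_Hp[OF cH] HpW unfolding c_def by blast
    qed
    then show ?thesis unfolding S_def using x by simp
  qed
  have "Dd \<subseteq> W"
  proof (rule Cm_subgroup_incl[OF sW])
    fix h g assume h: "h \<in> H" and g: "g \<in> carrier G"
    show "cmt G h g \<in> W"
      by (rule H_cmt_reduce[OF sS genS h g]) (auto simp: S_def g)
  qed
  then show "Dd \<subseteq> Hp <#> Cm G Dd" unfolding W_def .
qed

end

context gamma_setup begin

lemma step2: "Xp \<subseteq> Zc \<and> (\<forall>a\<in>Hp. a [^] p \<in> Zc)"
proof -
  define W where "W = Zc <#> Cm G Xp"
  have nCX: "Cm G Xp \<lhd> G" by (rule Cm_normal[OF normal_cinv[OF Xp_normal]])
  have nW: "W \<lhd> G" unfolding W_def by (rule set_mult_normal[OF center_normal nCX])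
  have sW: "subgroup W G" by (rule normal_imp_subgroup[OF nW])
  have CmW: "Cm G Xp \<subseteq> W" unfolding W_def
    by (rule set_mult_right_sub[OF sZ subgroup.subset[OF normal_imp_subgroup[OF nCX]]])
  have ZW: "Zc \<subseteq> W" unfolding W_def
    by (rule set_mult_left_sub[OF normal_imp_subgroup[OF nCX] subgroup.subset[OF sZ]])
  have Xc: "Xp \<subseteq> carrier G" by (rule subgroup.subset[OF normal_imp_subgroup[OF Xp_normal]])
  have psub: "powset G H p \<subseteq> carrier G" using powset_H_sub Hc by blast
  have XpI: "cmt G a g \<in> Xp" if "a \<in> Hp" "g \<in> carrier G" for a g
    using cmt_in_Cm that .
  have XpI': "cmt G g a \<in> Xp" if "a \<in> Hp" "g \<in> carrier G" for a g
    using cmt_in_Cm'[OF that Hpc] .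
  have cen: "cmt G g (cmt G a b) \<in> W" if a: "a \<in> Hp" and b: "b \<in> carrier G" and g: "g \<in> carrier G" for a b g
    using cmt_in_Cm'[OF XpI[OF a b] g Xc] CmW by blast
  have powW: "a [^] p \<in> W" if a: "a \<in> Hp" for a
    using a
  proof (induction rule: generate.induct)
    case one
    then show ?case using subgroup.one_closed[OF sW] by simp
  next
    case (incl h)
    then obtain h0 where h0: "h0 \<in> H" and hh: "h = h0 [^] p" unfolding powset_def by blast
    have h0c: "h0 \<in> carrier G" using h0 Hc by blast
    have "h [^] p = \<one>" using hh expH[OF h0] nat_pow_pow[OF h0c] by simp
    then show ?case using subgroup.one_closed[OF sW] by simp
  next
    case (inv h)
    then obtain h0 where h0: "h0 \<in> H" and hh: "h = h0 [^] p" unfolding powset_def by blast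
    have h0c: "h0 \<in> carrier G" using h0 Hc by blast
    have "h [^] p = \<one>" using hh expH[OF h0] nat_pow_pow[OF h0c] by simp
    moreover have "h \<in> carrier G" using hh h0c by simp
    ultimately have "inv h [^] p = \<one>" using nat_pow_inv by simp
    then show ?case using subgroup.one_closed[OF sW] by simp
  next
    case (eng a b)
    have ac: "a \<in> carrier G" using generate_in_carrier[OF psub eng.hyps(1)] .
    have bc: "b \<in> carrier G" using generate_in_carrier[OF psub eng.hyps(2)] .
    show ?case
    proof (rule mod_pow_mult[OF nW ac bc oddp eng.IH(1) eng.IH(2)])
      show "cmt G a (cmt G a b) \<in> W" by (rule cen[OF eng.hyps(1) bc ac])
      show "cmt G b (cmt G a b) \<in> W" by (rule cen[OF eng.hyps(1) bc bc])
    qed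
  qed
  define S where "S = {a \<in> carrier G. \<forall>g\<in>carrier G. cmt G a g \<in> W}"
  have sS: "subgroup S G" unfolding S_def by (rule cmt_sub_subgroup[OF nW])
  have genS: "h [^] p \<in> S" if h: "h \<in> H" for h
  proof -
    have hc: "h \<in> carrier G" using h Hc by blast
    have "cmt G (h [^] p) g \<in> W" if g: "g \<in> carrier G" for g
    proof (rule mod_cmt_pow_left'[OF nW hc g])
      define c where "c = cmt G h g"
      define d where "d = cmt G h c"
      have cD: "c \<in> Dd" unfolding c_def by (rule cmt_in_Cm[OF h g])
      have cHp: "c \<in> Hp" using cD step1 by blast
      have cc: "c \<in> carrier G" using cHp Hpc by blast
      have dX: "d \<in> Xp" unfolding d_def by (rule XpI'[OF cHp hc])
      have dc: "d \<in> carrier G" using dX Xc by blast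
      show "cmt G h (cmt G h (cmt G h g)) \<in> W"
        using cmt_in_Cm'[OF dX hc Xc] CmW unfolding d_def c_def by blast
      show "cmt G (cmt G h (cmt G h g)) (cmt G h g) \<in> W"
        using cmt_in_Cm[OF dX cc] CmW unfolding d_def c_def by blast
      show "odd p" by (rule oddp)
      have cpW: "c [^] p \<in> W" by (rule powW[OF cHp])
      show "cmt G h g [^] p \<in> W" using cpW unfolding c_def .
      have "cmt G c (cmt G h c) \<in> W" using cmt_in_Cm'[OF dX cc Xc] CmW unfolding d_def by blast
      then have "cmt G h c [^] p \<in> W" by (rule mod_cmt_pow_right[OF nW hc cc _ cpW])
      then show "cmt G h (cmt G h g) [^] p \<in> W" unfolding c_def .
    qed
    then show ?thesis unfolding S_def using h hc by simp
  qed
  have HpS: "Hp \<subseteq> S"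
    by (rule generate_subgroup_incl[OF _ sS]) (auto simp: powset_def genS)
  have "Xp \<subseteq> W"
    by (rule Cm_subgroup_incl[OF sW]) (use HpS S_def in blast)
  then have XZ: "Xp \<subseteq> Zc"
    by (intro nil_lemma[OF fin pp ord Xp_normal center_normal]) (simp add: W_def)
  have "Cm G Xp \<subseteq> Zc"
  proof (rule Cm_subgroup_incl[OF sZ])
    fix x g assume "x \<in> Xp" "g \<in> carrier G"
    then have "cmt G x g = \<one>" using XZ cmt_central_left by blast
    then show "cmt G x g \<in> Zc" using subgroup.one_closed[OF sZ] by simp
  qed
  then have "W \<subseteq> Zc <#> Zc" unfolding W_def by (rule mono_set_mult[OF subset_refl])
  then have WZ: "W \<subseteq> Zc" using set_mult_self[OF sZ] by simp
  show ?thesis using XZ powW WZ by blast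
qed

lemma step3: assumes x: "x \<in> carrier G" and y: "y \<in> carrier G"
  shows "cmt G (x [^] p) y [^] p = \<one>"
proof -
  have XZ: "Xp \<subseteq> Zc" and powZ: "\<And>a. a \<in> Hp \<Longrightarrow> a [^] p \<in> Zc" using step2 by auto
  have Xc: "Xp \<subseteq> carrier G" by (rule subgroup.subset[OF normal_imp_subgroup[OF Xp_normal]])
  define c where "c = cmt G x y"
  define d where "d = cmt G x c"
  define z where "z = cmt G x d"
  define w where "w = cmt G d c"
  have cH: "c \<in> H" unfolding c_def by (rule cmH[OF x y])
  have cc: "c \<in> carrier G" using cH Hc by blast
  have dD: "d \<in> Dd" unfolding d_def by (rule cmt_in_Cm'[OF cH x Hc])
  have dHp: "d \<in> Hp" using dD step1 by blast
  have dH: "d \<in> H" using dD D_sub_H by blast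
  have dc: "d \<in> carrier G" using dH Hc by blast
  have zZ: "z \<in> Zc" unfolding z_def using cmt_in_Cm'[OF dHp x Hpc] XZ by blast
  have wZ: "w \<in> Zc" unfolding w_def using cmt_in_Cm[OF dHp cc] XZ by blast
  have dpZ: "d [^] p \<in> Zc" by (rule powZ[OF dHp])
  have zp: "z [^] p = \<one>"
  proof -
    have "cmt G x (d [^] p) = cmt G x d [^] p"
      by (rule cmt_pow_right_gen[OF x dc]) (use centerD[OF zZ dc] z_def in simp)
    moreover have "cmt G x (d [^] p) = \<one>" by (rule cmt_central_right[OF dpZ x])
    ultimately show ?thesis using z_def by simp
  qed
  have wp: "w [^] p = \<one>"
  proof -
    have "cmt G (d [^] p) c = cmt G d c [^] p"
      by (rule cmt_pow_left_comm[OF dc cc]) (use centerD[OF wZ dc] w_def in simp)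
    moreover have "cmt G (d [^] p) c = \<one>" by (rule cmt_central_left[OF dpZ cc])
    ultimately show ?thesis using w_def by simp
  qed
  define E where "E = {z \<in> Zc. z [^] p = \<one>}"
  have nE: "E \<lhd> G" unfolding E_def by (rule pow_center_normal)
  have "cmt G (x [^] p) y \<otimes> inv (cmt G x (cmt G x y) [^] (p choose 2) \<otimes> cmt G x y [^] p) \<in> E"
  proof (rule mod_cmt_pow_left[OF nE x y])
    show "cmt G x (cmt G x (cmt G x y)) \<in> E" using zZ zp unfolding E_def z_def d_def c_def by simp
    show "cmt G (cmt G x (cmt G x y)) (cmt G x y) \<in> E" using wZ wp unfolding E_def w_def d_def c_def by simp
  qed
  then have ze: "cmt G (x [^] p) y \<otimes> inv (d [^] (p choose 2) \<otimes> c [^] p) \<in> E" unfolding c_def d_def .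
  define \<zeta> where "\<zeta> = cmt G (x [^] p) y \<otimes> inv (d [^] (p choose 2) \<otimes> c [^] p)"
  define m where "m = d [^] (p choose 2) \<otimes> c [^] p"
  have mc: "m \<in> carrier G" unfolding m_def using dc cc by simp
  have \<zeta>Z: "\<zeta> \<in> Zc" and \<zeta>p: "\<zeta> [^] p = \<one>" using ze unfolding \<zeta>_def E_def by auto
  have e_eq: "cmt G (x [^] p) y = \<zeta> \<otimes> m"
    unfolding \<zeta>_def m_def using x y dc cc by (simp add: m_assoc)
  have dC: "d [^] (p choose 2) = (d [^] p) [^] ((p - 1) div 2)"
    using choose2_odd[OF oddp] dc by (simp add: nat_pow_pow)
  have dCZ: "d [^] (p choose 2) \<in> Zc" unfolding dC by (rule subgroup_pow_closed[OF sZ dpZ])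
  have "m [^] p = (d [^] (p choose 2)) [^] p \<otimes> (c [^] p) [^] p"
    unfolding m_def by (rule pow_mult_distrib[OF centerD[OF dCZ] centerC[OF dCZ]]) (use cc in simp_all)
  also have "(c [^] p) [^] p = \<one>" using expH[OF cH] nat_pow_pow[OF cc] by simp
  also have "(d [^] (p choose 2)) [^] p = \<one>"
  proof -
    have "(d [^] (p choose 2)) [^] p = (d [^] (p * p)) [^] ((p - 1) div 2)"
      using choose2_odd[OF oddp] dc by (simp add: nat_pow_pow ac_simps)
    then show ?thesis using expH[OF dH] by simp
  qed
  finally have mp: "m [^] p = \<one>" by simp
  have "cmt G (x [^] p) y [^] p = \<zeta> [^] p \<otimes> m [^] p"
    unfolding e_eq by (rule pow_mult_distrib[OF centerD[OF \<zeta>Z mc] centerC[OF \<zeta>Z] mc])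
  then show ?thesis using \<zeta>p mp by simp
qed

theorem gamma_main: assumes x: "x \<in> carrier G" and y: "y \<in> carrier G"
  shows "x [^] p \<otimes> y [^] p = y [^] p \<otimes> x [^] p"
proof -
  have XZ: "Xp \<subseteq> Zc" using step2 by auto
  have xpH: "x [^] p \<in> H" by (rule powH[OF x])
  have xpc: "x [^] p \<in> carrier G" using x by simp
  define f where "f = cmt G y (x [^] p)"
  define \<delta> where "\<delta> = cmt G y f"
  have fD: "f \<in> Dd" unfolding f_def by (rule cmt_in_Cm'[OF xpH y Hc])
  have fHp: "f \<in> Hp" using fD step1 by blast
  have fc: "f \<in> carrier G" using fHp Hpc by blast
  have \<delta>Z: "\<delta> \<in> Zc" unfolding \<delta>_def using cmt_in_Cm'[OF fHp y Hpc] XZ by blast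
  have \<delta>c: "\<delta> \<in> carrier G" using centerC[OF \<delta>Z] .
  have fp: "f [^] p = \<one>"
  proof -
    have "f = inv (cmt G (x [^] p) y)" unfolding f_def using inv_cmt[OF xpc y] by simp
    then have "f [^] p = inv (cmt G (x [^] p) y [^] p)" using nat_pow_inv xpc y by simp
    then show ?thesis using step3[OF x y] by simp
  qed
  have \<delta>p: "\<delta> [^] p = \<one>"
  proof -
    have "cmt G y (f [^] p) = cmt G y f [^] p"
      by (rule cmt_pow_right_gen[OF y fc]) (use centerD[OF \<delta>Z fc] \<delta>_def in simp)
    then show ?thesis using fp y \<delta>_def by simp
  qed
  have \<delta>C: "\<delta> [^] (p choose 2) = \<one>"
    using choose2_odd[OF oddp] \<delta>p \<delta>c by (simp add: nat_pow_pow[symmetric])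
  have "cmt G (y [^] p) (x [^] p) = \<delta> [^] (p choose 2) \<otimes> f [^] p"
    by (rule cmt_pow_left_gen[OF y xpc f_def \<delta>_def])
       (use centerD[OF \<delta>Z y] centerD[OF \<delta>Z fc] in simp_all)
  then have "cmt G (y [^] p) (x [^] p) = \<one>" using \<delta>C fp by simp
  then show ?thesis using cmt_one_iff[of "y [^] p" "x [^] p"] x y by simp
qed

end

context group begin

lemma img_normal:
  assumes W: "W \<lhd> G" and M: "M \<lhd> G"
  shows "(\<lambda>a. W #> a) ` M \<lhd> G Mod W"
proof -
  interpret gh: group_hom G "G Mod W" "\<lambda>a. W #> a" by (rule pi_group_hom[OF W])
  let ?Q = "G Mod W"
  have sM: "subgroup M G" by (rule normal_imp_subgroup[OF M])
  have Mc: "M \<subseteq> carrier G" by (rule subgroup.subset[OF sM])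
  define A where "A = (\<lambda>a. W #> a) ` M"
  have sA: "subgroup A ?Q" unfolding A_def by (rule gh.subgroup_img_is_subgroup[OF sM])
  have "q \<otimes>\<^bsub>?Q\<^esub> a \<otimes>\<^bsub>?Q\<^esub> inv\<^bsub>?Q\<^esub> q \<in> A" if q: "q \<in> carrier ?Q" and a: "a \<in> A" for q a
  proof -
    obtain g where g: "g \<in> carrier G" and qg: "q = W #> g"
      using q carrier_FactGroup by (metis imageE)
    obtain m where m: "m \<in> M" and am: "a = W #> m" using a A_def by blast
    have mc: "m \<in> carrier G" using m Mc by blast
    have "q \<otimes>\<^bsub>?Q\<^esub> a \<otimes>\<^bsub>?Q\<^esub> inv\<^bsub>?Q\<^esub> q = W #> (g \<otimes> m \<otimes> inv g)"
      using qg am g mc by simp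
    moreover have "g \<otimes> m \<otimes> inv g \<in> M" by (rule normal.inv_op_closed2[OF M g m])
    ultimately show ?thesis unfolding A_def by blast
  qed
  then show ?thesis unfolding A_def[symmetric] by (intro gh.H.normal_invI[OF sA]) auto
qed

lemma centralizer_subgroup:
  assumes T: "T \<subseteq> carrier G"
  shows "subgroup {a \<in> carrier G. \<forall>t\<in>T. a \<otimes> t = t \<otimes> a} G"
proof (rule subgroupI)
  show "{a \<in> carrier G. \<forall>t\<in>T. a \<otimes> t = t \<otimes> a} \<subseteq> carrier G" by blast
  show "{a \<in> carrier G. \<forall>t\<in>T. a \<otimes> t = t \<otimes> a} \<noteq> {}" using T by (auto intro!: exI[of _ \<one>])
next
  fix a assume "a \<in> {a \<in> carrier G. \<forall>t\<in>T. a \<otimes> t = t \<otimes> a}"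
  then have ac: "a \<in> carrier G" and at: "\<And>t. t \<in> T \<Longrightarrow> a \<otimes> t = t \<otimes> a" by auto
  have "inv a \<otimes> t = t \<otimes> inv a" if t: "t \<in> T" for t
  proof -
    have tc: "t \<in> carrier G" using t T by blast
    have "inv a \<otimes> (a \<otimes> t) \<otimes> inv a = inv a \<otimes> (t \<otimes> a) \<otimes> inv a" using at[OF t] by simp
    then show ?thesis using ac tc by (simp add: m_assoc)
  qed
  then show "inv a \<in> {a \<in> carrier G. \<forall>t\<in>T. a \<otimes> t = t \<otimes> a}" using ac by simp
next
  fix a b assume "a \<in> {a \<in> carrier G. \<forall>t\<in>T. a \<otimes> t = t \<otimes> a}" "b \<in> {a \<in> carrier G. \<forall>t\<in>T. a \<otimes> t = t \<otimes> a}"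
  then have ac: "a \<in> carrier G" and at: "\<And>t. t \<in> T \<Longrightarrow> a \<otimes> t = t \<otimes> a"
    and bc: "b \<in> carrier G" and bt: "\<And>t. t \<in> T \<Longrightarrow> b \<otimes> t = t \<otimes> b" by auto
  have "a \<otimes> b \<otimes> t = t \<otimes> (a \<otimes> b)" if t: "t \<in> T" for t
  proof -
    have tc: "t \<in> carrier G" using t T by blast
    have "a \<otimes> b \<otimes> t = a \<otimes> (t \<otimes> b)" using bt[OF t] ac bc tc by (simp add: m_assoc)
    also have "\<dots> = (a \<otimes> t) \<otimes> b" using ac bc tc by (simp add: m_assoc)
    also have "\<dots> = t \<otimes> (a \<otimes> b)" using at[OF t] ac bc tc by (simp add: m_assoc)
    finally show ?thesis .
  qed
  then show "a \<otimes> b \<in> {a \<in> carrier G. \<forall>t\<in>T. a \<otimes> t = t \<otimes> a}" using ac bc by simp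
qed

lemma comm_gen:
  assumes S: "S \<subseteq> carrier G" and comm: "\<And>a b. a \<in> S \<Longrightarrow> b \<in> S \<Longrightarrow> a \<otimes> b = b \<otimes> a"
    and a: "a \<in> generate G S" and b: "b \<in> generate G S"
  shows "a \<otimes> b = b \<otimes> a"
proof -
  have g: "generate G S \<subseteq> {a \<in> carrier G. \<forall>t\<in>S. a \<otimes> t = t \<otimes> a}"
    by (rule generate_subgroup_incl[OF _ centralizer_subgroup[OF S]]) (use S comm in blast)
  have "S \<subseteq> {a \<in> carrier G. \<forall>t\<in>generate G S. a \<otimes> t = t \<otimes> a}"
  proof
    fix s assume s: "s \<in> S"
    have "s \<otimes> t = t \<otimes> s" if t: "t \<in> generate G S" for t
    proof -
      have "t \<in> {a \<in> carrier G. \<forall>t\<in>S. a \<otimes> t = t \<otimes> a}" using g t by blast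
      then show ?thesis using s by simp
    qed
    then show "s \<in> {a \<in> carrier G. \<forall>t\<in>generate G S. a \<otimes> t = t \<otimes> a}" using s S by blast
  qed
  then have "generate G S \<subseteq> {a \<in> carrier G. \<forall>t\<in>generate G S. a \<otimes> t = t \<otimes> a}"
    by (rule generate_subgroup_incl[OF _ centralizer_subgroup[OF generate_incl[OF S]]])
  then show ?thesis using a b by blast
qed

end

context group begin

lemma main_group:
  assumes fin: "finite (carrier G)" and pp: "Factorial_Ring.prime p" and oddp: "odd p"
    and ord: "order G = p ^ k"
    and qp: "quasi_powerful p G"
  shows "strongly_powerful p (G\<lparr>carrier := pow_subgroup G p <#> grp_center G\<rparr>)"
proof -
  define Np where "Np = generate G (powset G (carrier G) p)"
  have Np_eq: "pow_subgroup G p = Np" unfolding Np_def pow_subgroup_def powset_def by simp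
  define Z where "Z = grp_center G"
  define H where "H = Np <#> Z"
  have cinvC: "cinv G (carrier G)" unfolding cinv_def by simp
  have nNp: "Np \<lhd> G" unfolding Np_def by (rule cinv_gen_normal[OF powset_cinv[OF cinvC]])
  have nZ: "Z \<lhd> G" unfolding Z_def by (rule center_normal)
  have nH: "H \<lhd> G" unfolding H_def by (rule set_mult_normal[OF nNp nZ])
  have sH: "subgroup H G" by (rule normal_imp_subgroup[OF nH])
  have sNp: "subgroup Np G" by (rule normal_imp_subgroup[OF nNp])
  have sZ: "subgroup Z G" by (rule normal_imp_subgroup[OF nZ])
  have Hc: "H \<subseteq> carrier G" by (rule subgroup.subset[OF sH])
  have NpH: "Np \<subseteq> H" unfolding H_def by (rule set_mult_left_sub[OF sZ subgroup.subset[OF sNp]])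
  have ZH: "Z \<subseteq> H" unfolding H_def by (rule set_mult_right_sub[OF sNp subgroup.subset[OF sZ]])
  have powNp: "g [^] p \<in> Np" if g: "g \<in> carrier G" for g
    unfolding Np_def powset_def by (rule generate.incl) (use g in blast)
  have cmH: "cmt G x y \<in> H" if x: "x \<in> carrier G" and y: "y \<in> carrier G" for x y
  proof -
    interpret gh: group_hom G "G Mod Z" "\<lambda>a. Z #> a" by (rule pi_group_hom[OF nZ])
    let ?Q = "G Mod Z"
    have pw: "derived ?Q (carrier ?Q) \<subseteq> pow_subgroup ?Q p"
      using qp unfolding quasi_powerful_def powerful_def Z_def .
    have xq: "Z #> x \<in> carrier ?Q" and yq: "Z #> y \<in> carrier ?Q" using x y by auto
    have "cmt ?Q (Z #> x) (Z #> y) \<in> derived ?Q (carrier ?Q)"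
      unfolding derived_def cmt_def by (rule generate.incl) (use xq yq in blast)
    then have inP: "Z #> cmt G x y \<in> pow_subgroup ?Q p" using pw pi_cmt[OF nZ x y] by auto
    have sImg: "subgroup ((\<lambda>a. Z #> a) ` H) ?Q" by (rule gh.subgroup_img_is_subgroup[OF sH])
    have "pow_subgroup ?Q p \<subseteq> (\<lambda>a. Z #> a) ` H"
      unfolding pow_subgroup_def
    proof (rule gh.H.generate_subgroup_incl[OF _ sImg])
      show "{g [^]\<^bsub>?Q\<^esub> p | g. g \<in> carrier ?Q} \<subseteq> (\<lambda>a. Z #> a) ` H"
      proof
        fix q assume "q \<in> {g [^]\<^bsub>?Q\<^esub> p | g. g \<in> carrier ?Q}"
        then obtain g where g: "g \<in> carrier ?Q" and qg: "q = g [^]\<^bsub>?Q\<^esub> p" by blast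
        obtain a where a: "a \<in> carrier G" and ga: "g = Z #> a"
          using g carrier_FactGroup by (metis imageE)
        have "q = Z #> (a [^] p)" using qg ga a gh.hom_nat_pow by simp
        moreover have "a [^] p \<in> H" using powNp[OF a] NpH by blast
        ultimately show "q \<in> (\<lambda>a. Z #> a) ` H" by blast
      qed
    qed
    then obtain h where h: "h \<in> H" and eq: "Z #> cmt G x y = Z #> h" using inP by blast
    have hc: "h \<in> carrier G" using h Hc by blast
    have "cmt G x y \<otimes> inv h \<in> Z" by (rule pi_eq_imp[OF nZ _ hc eq]) (use x y in simp)
    then have "cmt G x y \<otimes> inv h \<in> H" using ZH by blast
    then have "(cmt G x y \<otimes> inv h) \<otimes> h \<in> H" by (rule subgroup.m_closed[OF sH _ h])
    then show ?thesis using x y hc by (simp add: m_assoc)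
  qed
  define T where "T = generate G (powset G H (p * p))"
  have nT: "T \<lhd> G" unfolding T_def by (rule cinv_gen_normal[OF powset_cinv[OF normal_cinv[OF nH]]])
  have sT: "subgroup T G" by (rule normal_imp_subgroup[OF nT])
  have psub: "powset G H (p * p) \<subseteq> H" unfolding powset_def using subgroup_pow_closed[OF sH] by blast
  have TH: "T \<subseteq> H" unfolding T_def by (rule generate_subgroup_incl[OF psub sH])
  have Tstr: "pow_subgroup (G\<lparr>carrier := H\<rparr>) (p ^ 2) = T"
  proof -
    have "{h [^]\<^bsub>G\<lparr>carrier := H\<rparr>\<^esub> (p ^ 2) | h. h \<in> carrier (G\<lparr>carrier := H\<rparr>)} = powset G H (p * p)"
      unfolding powset_def by (simp add: nat_pow_consistent[symmetric] power2_eq_square)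
    then show ?thesis unfolding pow_subgroup_def T_def using generate_consistent[OF psub sH] by simp
  qed
  interpret gh: group_hom G "G Mod T" "\<lambda>a. T #> a" by (rule pi_group_hom[OF nT])
  let ?R = "G Mod T"
  obtain j where fR: "finite (carrier ?R)" and oR: "order ?R = p ^ j"
    using quotient_p_group[OF fin pp ord nT] by blast
  define Hg where "Hg = (\<lambda>a. T #> a) ` H"
  have carR: "\<exists>g\<in>carrier G. q = T #> g" if "q \<in> carrier ?R" for q
    using that carrier_FactGroup by (metis imageE)
  have NpImg: "T #> n \<in> generate ?R (powset ?R (carrier ?R) p)" if n: "n \<in> Np" for n
  proof -
    have psC: "powset G (carrier G) p \<subseteq> carrier G" unfolding powset_def by auto
    have "T #> n \<in> (\<lambda>a. T #> a) ` generate G (powset G (carrier G) p)" using n Np_def by blast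
    also have "\<dots> = generate ?R ((\<lambda>a. T #> a) ` powset G (carrier G) p)"
      by (rule gh.generate_img[OF psC, symmetric])
    also have "\<dots> \<subseteq> generate ?R (powset ?R (carrier ?R) p)"
    proof (rule gh.H.mono_generate)
      show "(\<lambda>a. T #> a) ` powset G (carrier G) p \<subseteq> powset ?R (carrier ?R) p"
      proof
        fix q assume "q \<in> (\<lambda>a. T #> a) ` powset G (carrier G) p"
        then obtain g where g: "g \<in> carrier G" and qg: "q = T #> (g [^] p)" unfolding powset_def by blast
        have "q = (T #> g) [^]\<^bsub>?R\<^esub> p" using qg g gh.hom_nat_pow by simp
        moreover have "T #> g \<in> carrier ?R" using g by simp
        ultimately show "q \<in> powset ?R (carrier ?R) p" unfolding powset_def by blast
      qed
    qed
    finally show ?thesis .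
  qed
  have gs: "gamma_setup ?R p j Hg"
  proof (rule gamma_setup.intro[OF gh.H.is_group gamma_setup_axioms.intro])
    show "finite (carrier ?R)" by (rule fR)
    show "Factorial_Ring.prime p" by (rule pp)
    show "odd p" by (rule oddp)
    show "order ?R = p ^ j" by (rule oR)
    show "Hg \<lhd> ?R" unfolding Hg_def by (rule img_normal[OF nT nH])
  next
    fix q assume q: "q \<in> carrier ?R"
    obtain g where g: "g \<in> carrier G" and qg: "q = T #> g" using carR[OF q] by blast
    have "q [^]\<^bsub>?R\<^esub> p = T #> (g [^] p)" using qg g gh.hom_nat_pow by simp
    moreover have "g [^] p \<in> H" using powNp[OF g] NpH by blast
    ultimately show "q [^]\<^bsub>?R\<^esub> p \<in> Hg" unfolding Hg_def by blast
  next
    fix q1 q2 assume q1: "q1 \<in> carrier ?R" and q2: "q2 \<in> carrier ?R"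
    obtain x where x: "x \<in> carrier G" and qx: "q1 = T #> x" using carR[OF q1] by blast
    obtain y where y: "y \<in> carrier G" and qy: "q2 = T #> y" using carR[OF q2] by blast
    have "cmt ?R q1 q2 = T #> cmt G x y" using pi_cmt[OF nT x y] qx qy by simp
    then show "cmt ?R q1 q2 \<in> Hg" unfolding Hg_def using cmH[OF x y] by blast
  next
    fix h' assume h': "h' \<in> Hg"
    obtain h where h: "h \<in> H" and hh: "h' = T #> h" using h' Hg_def by blast
    have hc: "h \<in> carrier G" using h Hc by blast
    have "h [^] (p * p) \<in> T" unfolding T_def powset_def by (rule generate.incl) (use h in blast)
    then have "T #> (h [^] (p * p)) = T" using pi_one_iff[OF nT] hc by simp
    then show "h' [^]\<^bsub>?R\<^esub> (p * p) = \<one>\<^bsub>?R\<^esub>" using hh hc gh.hom_nat_pow by (simp add: one_FactGroup)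
  next
    fix h' assume h': "h' \<in> Hg"
    obtain h where h: "h \<in> H" and hh: "h' = T #> h" using h' Hg_def by blast
    obtain n z where n: "n \<in> Np" and z: "z \<in> Z" and hnz: "h = n \<otimes> z"
      using h unfolding H_def set_mult_def by blast
    have nc: "n \<in> carrier G" using n subgroup.subset[OF sNp] by blast
    have zc: "z \<in> carrier G" using z subgroup.subset[OF sZ] by blast
    have e: "h' = (T #> n) \<otimes>\<^bsub>?R\<^esub> (T #> z)" using hh hnz nc zc by simp
    have zcen: "T #> z \<in> grp_center ?R"
    proof -
      have "(T #> z) \<otimes>\<^bsub>?R\<^esub> q = q \<otimes>\<^bsub>?R\<^esub> (T #> z)" if q: "q \<in> carrier ?R" for q
      proof -
        obtain g where g: "g \<in> carrier G" and qg: "q = T #> g" using carR[OF q] by blast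
        have "z \<otimes> g = g \<otimes> z" using centerD z g Z_def by blast
        then show ?thesis using qg g zc gh.hom_mult by metis
      qed
      then show ?thesis unfolding grp_center_def using zc by simp
    qed
    show "\<exists>n\<in>generate ?R (powset ?R (carrier ?R) p). \<exists>z\<in>grp_center ?R. h' = n \<otimes>\<^bsub>?R\<^esub> z"
      using NpImg[OF n] zcen e by blast
  qed
  have commR: "a \<otimes>\<^bsub>?R\<^esub> b = b \<otimes>\<^bsub>?R\<^esub> a"
    if a: "a \<in> generate ?R (powset ?R (carrier ?R) p)" and b: "b \<in> generate ?R (powset ?R (carrier ?R) p)" for a b
  proof (rule gh.H.comm_gen[OF _ _ a b])
    show "powset ?R (carrier ?R) p \<subseteq> carrier ?R" unfolding powset_def by auto
    fix u v assume "u \<in> powset ?R (carrier ?R) p" "v \<in> powset ?R (carrier ?R) p"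
    then obtain u0 v0 where u0: "u0 \<in> carrier ?R" and v0: "v0 \<in> carrier ?R"
      and uu: "u = u0 [^]\<^bsub>?R\<^esub> p" and vv: "v = v0 [^]\<^bsub>?R\<^esub> p" unfolding powset_def by blast
    show "u \<otimes>\<^bsub>?R\<^esub> v = v \<otimes>\<^bsub>?R\<^esub> u" using gamma_setup.gamma_main[OF gs u0 v0] uu vv by simp
  qed
  have cmNp: "cmt G n m \<in> T" if n: "n \<in> Np" and m: "m \<in> Np" for n m
  proof -
    have nc: "n \<in> carrier G" using n subgroup.subset[OF sNp] by blast
    have mc: "m \<in> carrier G" using m subgroup.subset[OF sNp] by blast
    have "(T #> n) \<otimes>\<^bsub>?R\<^esub> (T #> m) = (T #> m) \<otimes>\<^bsub>?R\<^esub> (T #> n)"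
      by (rule commR[OF NpImg[OF n] NpImg[OF m]])
    then have "cmt ?R (T #> n) (T #> m) = \<one>\<^bsub>?R\<^esub>" using gh.H.cmt_one_iff nc mc by simp
    then have "T #> cmt G n m = T" using pi_cmt[OF nT nc mc] by (simp add: one_FactGroup)
    then show ?thesis using pi_one_iff[OF nT] nc mc by simp
  qed
  have cmHT: "cmt G u v \<in> T" if u: "u \<in> H" and v: "v \<in> H" for u v
  proof -
    obtain n z where n: "n \<in> Np" and z: "z \<in> Z" and unz: "u = n \<otimes> z"
      using u unfolding H_def set_mult_def by blast
    obtain m z' where m: "m \<in> Np" and z': "z' \<in> Z" and vmz: "v = m \<otimes> z'"
      using v unfolding H_def set_mult_def by blast
    have nc: "n \<in> carrier G" using n subgroup.subset[OF sNp] by blast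
    have mc: "m \<in> carrier G" using m subgroup.subset[OF sNp] by blast
    have zc: "z' \<in> carrier G" using z' subgroup.subset[OF sZ] by blast
    have vc: "v \<in> carrier G" using vmz mc zc by simp
    have "cmt G u v = cmt G n v" using unz cmt_mult_central[OF nc _ vc] z Z_def by simp
    also have "\<dots> = inv (cmt G v n)" using inv_cmt[OF vc nc] by simp
    also have "cmt G v n = cmt G m n" using vmz cmt_mult_central[OF mc _ nc] z' Z_def by simp
    also have "inv (cmt G m n) = cmt G n m" using inv_cmt[OF mc nc] by simp
    finally show ?thesis using cmNp[OF n m] by simp
  qed
  have grpH: "group (G\<lparr>carrier := H\<rparr>)" by (rule subgroup_imp_group[OF sH])
  have sTH: "subgroup T (G\<lparr>carrier := H\<rparr>)" by (rule subgroup_incl[OF sT sH TH])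
  have "derived (G\<lparr>carrier := H\<rparr>) (carrier (G\<lparr>carrier := H\<rparr>)) \<subseteq> T"
    unfolding derived_def
  proof (rule group.generate_subgroup_incl[OF grpH _ sTH])
    show "derived_set (G\<lparr>carrier := H\<rparr>) (carrier (G\<lparr>carrier := H\<rparr>)) \<subseteq> T"
    proof
      fix w assume "w \<in> derived_set (G\<lparr>carrier := H\<rparr>) (carrier (G\<lparr>carrier := H\<rparr>))"
      then obtain h1 h2 where h1: "h1 \<in> H" and h2: "h2 \<in> H"
        and w: "w = h1 \<otimes> h2 \<otimes> inv\<^bsub>G\<lparr>carrier := H\<rparr>\<^esub> h1 \<otimes> inv\<^bsub>G\<lparr>carrier := H\<rparr>\<^esub> h2" by auto
      have "w = cmt G h1 h2" using w m_inv_consistent[OF sH h1] m_inv_consistent[OF sH h2] by (simp add: cmt_def)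
      then show "w \<in> T" using cmHT[OF h1 h2] by simp
    qed
  qed
  then show ?thesis unfolding strongly_powerful_def Np_eq H_def[symmetric] Z_def[symmetric] Tstr .
qed

end

theorem proposition8p3:
  fixes G :: "('a, 'b) monoid_scheme" and p :: nat
  assumes "Factorial_Ring.prime p" and "odd p"
    and "p_group p G"
    and "quasi_powerful p G"
  shows "strongly_powerful p
           (G\<lparr>carrier := pow_subgroup G p <#>\<^bsub>G\<^esub> grp_center G\<rparr>)"
proof -
  have grp: "group G" and fin: "finite (carrier G)" and ex: "\<exists>k. order G = p ^ k"
    using assms(3) unfolding p_group_def by auto
  obtain k where k: "order G = p ^ k" using ex by blast
  show ?thesis by (rule group.main_group[OF grp fin assms(1) assms(2) k assms(4)])
qed

end
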